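(* Let $b\ge2$ be an integer, $\lambda\in(1/b,1)$, and let $\phi$ be a real analytic $\mathbb{Z}$-periodic function satisfying condition (H). Then there exist positive integers $\ell_0,Q_0$ and a constant $\rho_0>0$ such that for every $n\in\mathbb{Z}_+$ and all $\mathbf{u},\mathbf{v}\in\Sigma$ with $u_n\ne v_n$: $\sup_{x\in[0,1)}|Y(x,\mathbf{u})-Y(x,\mathbf{v})|\ge\rho_0 b^{-Q_0n}$, and $\sum_{I\in\mathcal{L}_{\ell_0},\,I\subset[0,1)}\ \inf_{x\in I}|Y(x,\mathbf{u})-Y(x,\mathbf{v})|\ \ge\ \rho_0\sup_{x\in[0,1]}|Y(x,\mathbf{u})-Y(x,\mathbf{v})|.$
   Context: $\Lambda=\{0,\dots,b-1\}$, $\Sigma=\Lambda^{\mathbb{Z}_+}$, $\mathbf{u}=u_1u_2\cdots$. $\gamma=1/(b\lambda)$, $Y(x,\mathbf{j})=-\sum_{n\ge1}\gamma^n\phi'\!\left(\frac{x}{b^n}+\frac{j_1}{b^n}+\frac{j_2}{b^{n-1}}+\cdots+\frac{j_n}{b}\right)$ (this is the derivative of $\Gamma_{\mathbf{j}}(x)=\int_0^xY(t,\mathbf{j})dt$). Condition (H): $Y(\cdot,\mathbf{j})-Y(\cdot,\mathbf{i})\not\equiv0$ for all $\mathbf{i}\ne\mathbf{j}\in\Sigma$. $\mathcal{L}_\ell$ is the partition of $\mathbb{R}$ into intervals $[j/b^\ell,(j+1)/b^\ell)$, $j\in\mathbb{Z}$. *)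

theory Defs
  imports "HOL-Analysis.Analysis"
begin

definition real_analytic_on :: "real set \<Rightarrow> (real \<Rightarrow> real) \<Rightarrow> bool" where
  "real_analytic_on S f \<longleftrightarrow>
     (\<forall>x\<in>S. \<exists>r>0. \<exists>c::nat \<Rightarrow> real. \<forall>y. \<bar>y - x\<bar> < r \<longrightarrow> (\<lambda>n. c n * (y - x) ^ n) sums f y)"

text \<open>Sigma = Lambda^{Z_+}: sequences indexed by positive integers (position 0 is unused and
  normalised to 0) with digits in {0,...,b-1}.\<close>
definition Sigma :: "nat \<Rightarrow> (nat \<Rightarrow> nat) set" where
  "Sigma b = {j. j 0 = 0 \<and> (\<forall>k\<ge>1. j k < b)}"

definition Yfun :: "nat \<Rightarrow> real \<Rightarrow> (real \<Rightarrow> real) \<Rightarrow> real \<Rightarrow> (nat \<Rightarrow> nat) \<Rightarrow> real" where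
  "Yfun b lam \<phi> x j =
     - (\<Sum>m. (1 / (real b * lam)) ^ (Suc m) *
          deriv \<phi> (x / real b ^ (Suc m) + (\<Sum>k=1..Suc m. real (j k) / real b ^ (Suc m + 1 - k))))"

definition condH :: "nat \<Rightarrow> real \<Rightarrow> (real \<Rightarrow> real) \<Rightarrow> bool" where
  "condH b lam \<phi> \<longleftrightarrow>
     (\<forall>i\<in>Sigma b. \<forall>j\<in>Sigma b. i \<noteq> j \<longrightarrow> (\<exists>x. Yfun b lam \<phi> x j - Yfun b lam \<phi> x i \<noteq> 0))"

end

theory Submission
  imports Defs
begin


lemma mvt_lower:
  fixes f f' :: "real \<Rightarrow> real"
  assumes d: "\<And>x. (f has_real_derivative f' x) (at x)"
    and S: "is_interval S" and xS: "x \<in> S" and yS: "y \<in> S" and xy: "x \<le> y"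
    and lo: "\<And>z. z \<in> S \<Longrightarrow> f' z \<ge> c"
  shows "f y - f x \<ge> c * (y - x)"
proof (cases "x = y")
  case True thus ?thesis by simp
next
  case False
  hence lt: "x < y" using xy by simp
  from MVT2[OF lt, of f f'] d obtain z where z: "x < z" "z < y" "f y - f x = (y - x) * f' z"
    by blast
  have "z \<in> S" using S xS yS z unfolding is_interval_1 by (meson less_imp_le)
  hence "f' z \<ge> c" by (rule lo)
  thus ?thesis using z lt by (simp add: mult.commute mult_right_mono)
qed

lemma mvt_abs:
  fixes f f' :: "real \<Rightarrow> real"
  assumes d: "\<And>x. (f has_real_derivative f' x) (at x)"
    and S: "is_interval S" and xS: "x \<in> S" and yS: "y \<in> S"
    and hi: "\<And>z. z \<in> S \<Longrightarrow> \<bar>f' z\<bar> \<le> H"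
  shows "\<bar>f y - f x\<bar> \<le> H * \<bar>y - x\<bar>"
proof -
  have *: "\<bar>f q - f p\<bar> \<le> H * \<bar>q - p\<bar>" if "p \<in> S" "q \<in> S" "p < q" for p q
  proof -
    from MVT2[OF \<open>p<q\<close>, of f f'] d obtain z where z: "p < z" "z < q" "f q - f p = (q - p) * f' z"
      by blast
    have "z \<in> S" using S that z unfolding is_interval_1 by (meson less_imp_le)
    hence "\<bar>f' z\<bar> \<le> H" by (rule hi)
    thus ?thesis using z \<open>p<q\<close> by (simp add: abs_mult mult.commute mult_right_mono)
  qed
  show ?thesis
    using *[OF xS yS] *[OF yS xS] by (cases x y rule: linorder_cases) (auto simp: abs_minus_commute)
qed

definition badcells :: "real \<Rightarrow> real set \<Rightarrow> (real \<Rightarrow> real) \<Rightarrow> real \<Rightarrow> int set" where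
  "badcells l S g e = {i. \<exists>x\<in>S. of_int i * l \<le> x \<and> x < (of_int i + 1) * l \<and> \<bar>g x\<bar> < e}"

lemma badcells_mono: "S \<subseteq> S' \<Longrightarrow> badcells l S g e \<subseteq> badcells l S' g e"
  unfolding badcells_def by blast

lemma cells_close:
  fixes l x y :: real
  assumes "l > 0" "of_int i * l \<le> x" "x < (of_int i + 1) * l"
      "of_int j * l \<le> y" "y < (of_int j + 1) * l" "\<bar>x - y\<bar> < 2 * l"
  shows "\<bar>i - j\<bar> \<le> 2"
proof -
  have "of_int i * l - (of_int j + 1) * l < 2 * l" using assms by auto
  hence "(of_int i - of_int j - 1) * l < 2 * l" by (simp add: algebra_simps)
  hence a: "of_int i - of_int j - 1 < (2::real)" using assms(1) by simp
  have "of_int j * l - (of_int i + 1) * l < 2 * l" using assms by auto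
  hence "(of_int j - of_int i - 1) * l < 2 * l" by (simp add: algebra_simps)
  hence b: "of_int j - of_int i - 1 < (2::real)" using assms(1) by simp
  from a b have "i - j < 3" "j - i < 3" by linarith+
  thus ?thesis by linarith
qed

lemma small_diam_card:
  fixes A :: "int set"
  assumes "\<And>i j. i \<in> A \<Longrightarrow> j \<in> A \<Longrightarrow> \<bar>i - j\<bar> \<le> 2"
  shows "finite A \<and> card A \<le> 3"
proof (cases "A = {}")
  case True thus ?thesis by simp
next
  case False
  then obtain i0 where i0: "i0 \<in> A" by blast
  have fin: "finite A"
  proof (rule finite_subset[of _ "{i0-2..i0+2}"])
    show "A \<subseteq> {i0-2..i0+2}"
    proof
      fix x assume "x \<in> A"
      hence "\<bar>x - i0\<bar> \<le> 2" using assms i0 by blast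
      thus "x \<in> {i0-2..i0+2}" by auto
    qed
  qed simp
  define m where "m = Min A"
  have mA: "m \<in> A" using fin False by (simp add: m_def)
  have "A \<subseteq> {m..m+2}"
  proof
    fix i assume "i \<in> A"
    hence "m \<le> i" using fin by (simp add: m_def)
    moreover have "\<bar>i - m\<bar> \<le> 2" using assms \<open>i\<in>A\<close> mA by blast
    ultimately show "i \<in> {m..m+2}" by auto
  qed
  hence "card A \<le> card {m..m+2}" by (rule card_mono[rotated]) simp
  thus ?thesis using fin by simp
qed

lemma count_bad:
  fixes f :: "nat \<Rightarrow> real \<Rightarrow> real"
  assumes d: "\<And>i x. (f i has_real_derivative f (Suc i) x) (at x)"
    and S: "is_interval S" and dl: "\<delta> > 0" and l: "l > 0"
    and lo: "\<And>x. x \<in> S \<Longrightarrow> f k x \<ge> \<delta>"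
  shows "finite (badcells l S (f 0) (\<delta> * l ^ k)) \<and> card (badcells l S (f 0) (\<delta> * l ^ k)) \<le> 3 * (2 ^ k - 1)"
  using d S dl lo
proof (induction k arbitrary: f S \<delta>)
  case 0
  hence "badcells l S (f 0) (\<delta> * l ^ 0) = {}" unfolding badcells_def by force
  thus ?case by simp
next
  case (Suc k)
  note dk = Suc.prems(1)
  define T where "T = {x\<in>S. \<bar>f k x\<bar> < \<delta> * l}"
  define Sp where "Sp = {x\<in>S. f k x \<ge> \<delta> * l}"
  define Sm where "Sm = {x\<in>S. f k x \<le> - (\<delta> * l)}"
  have incr: "f k y - f k x \<ge> \<delta> * (y - x)" if "x \<in> S" "y \<in> S" "x \<le> y" for x y
    by (rule mvt_lower[OF dk Suc.prems(2) that]) (use Suc.prems(4) in auto)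
  have dl': "\<delta> * l > 0" using Suc.prems(3) l by simp
  have ivp: "is_interval Sp"
    unfolding is_interval_1 Sp_def
  proof (clarify, intro conjI)
    fix a b x assume a: "a \<in> S" "\<delta> * l \<le> f k a" and b: "b \<in> S" "\<delta> * l \<le> f k b" and x: "a \<le> x" "x \<le> b"
    show xS: "x \<in> S" using Suc.prems(2) a b x unfolding is_interval_1 by blast
    have "f k x - f k a \<ge> \<delta> * (x - a)" by (rule incr[OF a(1) xS x(1)])
    moreover have "\<delta> * (x - a) \<ge> 0" using Suc.prems(3) x by simp
    ultimately show "\<delta> * l \<le> f k x" using a by linarith
  qed
  have ivm: "is_interval Sm"
    unfolding is_interval_1 Sm_def
  proof (clarify, intro conjI)
    fix a b x assume a: "a \<in> S" "f k a \<le> - (\<delta> * l)" and b: "b \<in> S" "f k b \<le> - (\<delta> * l)" and x: "a \<le> x" "x \<le> b"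
    show xS: "x \<in> S" using Suc.prems(2) a b x unfolding is_interval_1 by blast
    have "f k b - f k x \<ge> \<delta> * (b - x)" by (rule incr[OF xS b(1) x(2)])
    moreover have "\<delta> * (b - x) \<ge> 0" using Suc.prems(3) x by simp
    ultimately show "f k x \<le> - (\<delta> * l)" using b by linarith
  qed
  have IHp: "finite (badcells l Sp (f 0) (\<delta> * l * l ^ k)) \<and> card (badcells l Sp (f 0) (\<delta> * l * l ^ k)) \<le> 3 * (2 ^ k - 1)"
    by (rule Suc.IH[of f Sp "\<delta> * l", OF dk ivp dl']) (auto simp: Sp_def)
  define g where "g = (\<lambda>i x. - f i x)"
  have dg: "\<And>i x. (g i has_real_derivative g (Suc i) x) (at x)"
    unfolding g_def using dk by (auto intro: derivative_eq_intros)
  have IHm: "finite (badcells l Sm (g 0) (\<delta> * l * l ^ k)) \<and> card (badcells l Sm (g 0) (\<delta> * l * l ^ k)) \<le> 3 * (2 ^ k - 1)"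
    by (rule Suc.IH[of g Sm "\<delta> * l", OF dg ivm dl']) (auto simp: Sm_def g_def)
  have gsame: "badcells l Sm (g 0) e = badcells l Sm (f 0) e" for e
    unfolding badcells_def g_def by simp
  define CT where "CT = {i. \<exists>x\<in>T. of_int i * l \<le> x \<and> x < (of_int i + 1) * l}"
  have CT: "finite CT \<and> card CT \<le> 3"
  proof (rule small_diam_card)
    fix i j assume "i \<in> CT" "j \<in> CT"
    then obtain x y where x: "x \<in> T" "of_int i * l \<le> x" "x < (of_int i + 1) * l"
      and y: "y \<in> T" "of_int j * l \<le> y" "y < (of_int j + 1) * l" unfolding CT_def by blast
    have xy: "\<bar>x - y\<bar> < 2 * l"
    proof -
      have xs: "x \<in> S" "\<bar>f k x\<bar> < \<delta> * l" and ys: "y \<in> S" "\<bar>f k y\<bar> < \<delta> * l" using x y by (auto simp: T_def)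
      have "\<delta> * \<bar>x - y\<bar> < \<delta> * (2 * l)"
      proof (cases "x \<le> y")
        case True
        from incr[OF xs(1) ys(1) True] xs ys have "\<delta> * (y - x) < 2 * (\<delta> * l)" by linarith
        thus ?thesis using True using dl' by (simp add: abs_if algebra_simps)
      next
        case False
        from incr[OF ys(1) xs(1)] False xs ys have "\<delta> * (x - y) < 2 * (\<delta> * l)" by linarith
        thus ?thesis using False by (simp add: abs_if algebra_simps)
      qed
      thus ?thesis using Suc.prems(3) by simp
    qed
    show "\<bar>i - j\<bar> \<le> 2" by (rule cells_close[OF l x(2,3) y(2,3) xy])
  qed
  have sub: "badcells l S (f 0) (\<delta> * l ^ Suc k) \<subseteq> CT \<union> badcells l Sp (f 0) (\<delta> * l * l ^ k) \<union> badcells l Sm (f 0) (\<delta> * l * l ^ k)"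
  proof
    fix i assume "i \<in> badcells l S (f 0) (\<delta> * l ^ Suc k)"
    then obtain x where x: "x \<in> S" "of_int i * l \<le> x" "x < (of_int i + 1) * l" "\<bar>f 0 x\<bar> < \<delta> * l ^ Suc k"
      unfolding badcells_def by blast
    have e: "\<delta> * l ^ Suc k = \<delta> * l * l ^ k" by simp
    show "i \<in> CT \<union> badcells l Sp (f 0) (\<delta> * l * l ^ k) \<union> badcells l Sm (f 0) (\<delta> * l * l ^ k)"
    proof (cases "\<bar>f k x\<bar> < \<delta> * l")
      case True thus ?thesis using x unfolding CT_def T_def by blast
    next
      case False
      hence "x \<in> Sp \<or> x \<in> Sm" using x(1) unfolding Sp_def Sm_def by auto
      thus ?thesis using x e unfolding badcells_def by auto
    qed
  qed
  have fin: "finite (CT \<union> badcells l Sp (f 0) (\<delta> * l * l ^ k) \<union> badcells l Sm (f 0) (\<delta> * l * l ^ k))"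
    using CT IHp IHm gsame by auto
  have "card (badcells l S (f 0) (\<delta> * l ^ Suc k)) \<le> card (CT \<union> badcells l Sp (f 0) (\<delta> * l * l ^ k) \<union> badcells l Sm (f 0) (\<delta> * l * l ^ k))"
    by (rule card_mono[OF fin sub])
  also have "\<dots> \<le> card CT + card (badcells l Sp (f 0) (\<delta> * l * l ^ k)) + card (badcells l Sm (f 0) (\<delta> * l * l ^ k))"
    by (metis (no_types, lifting) add_mono card_Un_le le_trans order_refl)
  also have "\<dots> \<le> 3 + 3 * (2 ^ k - 1) + 3 * (2 ^ k - 1)"
    using CT IHp IHm gsame by (intro add_mono) auto
  also have "\<dots> = 3 * (2 ^ Suc k - 1)"
  proof -
    have "(2::nat) ^ k \<ge> 1" by simp
    thus ?thesis by (simp add: algebra_simps)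
  qed
  finally show ?case using finite_subset[OF sub fin] by simp
qed


lemma chain_lemma:
  fixes f :: "nat \<Rightarrow> real \<Rightarrow> real"
  assumes d: "\<And>i x. (f i has_real_derivative f (Suc i) x) (at x)"
    and L: "L > 0" "L \<le> 1" and C: "C \<ge> 1" and kK: "k \<le> K"
    and hk: "\<And>z. z \<in> {a..a+L} \<Longrightarrow> \<bar>f k z\<bar> \<ge> \<delta>1" and d1: "\<delta>1 > 0"
    and hK: "\<And>z. z \<in> {a..a+L} \<Longrightarrow> \<bar>f (Suc K) z\<bar> \<le> A1" and AC: "A1 < C * \<delta>1"
  shows "\<exists>j\<le>K. \<exists>t0\<in>{a..a+L}. \<exists>V sg. (sg = 1 \<or> sg = -1) \<and> (\<forall>t\<in>{a..a+L}. \<bar>f 0 t\<bar> \<le> V) \<and>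
          (\<forall>t\<in>{a..a+L}. \<bar>t - t0\<bar> \<le> L / (2 * C) \<longrightarrow> sg * f j t \<ge> V / 2)"
proof -
  let ?S = "{a..a+L}"
  have cont: "continuous_on ?S (\<lambda>y. \<bar>f i y\<bar>)" for i
  proof -
    have "continuous_on ?S (f i)"
      by (rule continuous_at_imp_continuous_on) (use d DERIV_isCont in blast)
    thus ?thesis by (intro continuous_intros)
  qed
  have "\<forall>i. \<exists>t. t \<in> ?S \<and> (\<forall>y\<in>?S. \<bar>f i y\<bar> \<le> \<bar>f i t\<bar>)"
  proof
    fix i
    show "\<exists>t. t \<in> ?S \<and> (\<forall>y\<in>?S. \<bar>f i y\<bar> \<le> \<bar>f i t\<bar>)"
      using continuous_attains_sup[OF compact_Icc _ cont[of i]] L by auto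
  qed
  then obtain tm where tm: "\<And>i. tm i \<in> ?S" "\<And>i y. y \<in> ?S \<Longrightarrow> \<bar>f i y\<bar> \<le> \<bar>f i (tm i)\<bar>"
    by metis
  define V where "V i = \<bar>f i (tm i)\<bar>" for i
  have V0: "V i \<ge> 0" for i by (simp add: V_def)
  have CL: "C / L \<ge> 1" using C L by (simp add: field_simps)
  have aS: "a \<in> ?S" using L by simp
  have ex: "\<exists>j. j \<le> K \<and> V (Suc j) \<le> (C / L) * V j"
  proof (rule ccontr)
    assume "\<not> ?thesis"
    hence gt: "\<And>j. j \<le> K \<Longrightarrow> V (Suc j) > (C / L) * V j" by force
    have ind: "k + i \<le> Suc K \<longrightarrow> V (k + i) \<ge> (C / L) ^ i * V k" for i
    proof (induction i)
      case 0 thus ?case by simp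
    next
      case (Suc i)
      show ?case
      proof
        assume a: "k + Suc i \<le> Suc K"
        hence "V (k + i) \<ge> (C / L) ^ i * V k" using Suc by simp
        moreover have "V (Suc (k + i)) > (C / L) * V (k + i)" using gt a by simp
        moreover have "(C / L) * V (k + i) \<ge> (C / L) * ((C / L) ^ i * V k)"
          using calculation(1) CL by (intro mult_left_mono) auto
        ultimately show "V (k + Suc i) \<ge> (C / L) ^ Suc i * V k" by (simp add: mult.assoc)
      qed
    qed
    define e where "e = Suc K - k"
    have e1: "e \<ge> 1" and ke: "k + e = Suc K" using kK by (auto simp: e_def)
    have "V (Suc K) \<ge> (C / L) ^ e * V k" using ind[of e] ke by simp
    moreover have "(C / L) ^ e \<ge> C / L"
      using CL e1 by (metis power_increasing power_one_right)
    moreover have "C / L \<ge> C" using C L by (simp add: field_simps mult_left_le)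
    moreover have "V k \<ge> \<delta>1" using hk[OF aS] tm(2)[OF aS, of k] by (simp add: V_def)
    ultimately have "V (Suc K) \<ge> C * \<delta>1"
      using V0[of k] C d1
      by (smt (verit, best) mult_mono)
    moreover have "V (Suc K) \<le> A1" using hK[OF tm(1)] by (simp add: V_def)
    ultimately show False using AC by simp
  qed
  define j where "j = (LEAST j. j \<le> K \<and> V (Suc j) \<le> (C / L) * V j)"
  have j: "j \<le> K" "V (Suc j) \<le> (C / L) * V j"
    using LeastI_ex[OF ex] by (auto simp: j_def)
  have before: "i < j \<Longrightarrow> V (Suc i) > (C / L) * V i" for i
  proof -
    assume "i < j"
    hence "\<not> (i \<le> K \<and> V (Suc i) \<le> (C / L) * V i)" unfolding j_def by (rule not_less_Least)
    thus ?thesis using \<open>i < j\<close> j(1) by auto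
  qed
  have mono: "i \<le> j \<longrightarrow> V i \<ge> V 0" for i
  proof (induction i)
    case 0 thus ?case by simp
  next
    case (Suc i)
    show ?case
    proof
      assume "Suc i \<le> j"
      hence "V (Suc i) > (C / L) * V i" "V i \<ge> V 0" using before Suc by auto
      moreover have "(C / L) * V i \<ge> V i" using mult_right_mono[OF CL V0[of i]] by simp
      ultimately show "V (Suc i) \<ge> V 0" by linarith
    qed
  qed
  define t0 where "t0 = tm j"
  define sg :: real where "sg = (if f j t0 \<ge> 0 then 1 else -1)"
  have sgv: "sg * f j t0 = V j" by (simp add: sg_def V_def t0_def)
  have P1: "t0 \<in> ?S" using tm(1)[of j] by (simp add: t0_def)
  have P2: "sg = 1 \<or> sg = -1" by (simp add: sg_def)
  have P3: "\<forall>t\<in>?S. \<bar>f 0 t\<bar> \<le> V j"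
  proof
    fix t assume tS: "t \<in> ?S"
    show "\<bar>f 0 t\<bar> \<le> V j" using tm(2)[OF tS, of 0] mono[of j] by (simp add: V_def)
  qed
  have P4: "\<forall>t\<in>?S. \<bar>t - t0\<bar> \<le> L / (2 * C) \<longrightarrow> sg * f j t \<ge> V j / 2"
  proof (intro ballI impI)
    fix t assume tS: "t \<in> ?S" and tt: "\<bar>t - t0\<bar> \<le> L / (2 * C)"
    have "\<bar>f j t - f j t0\<bar> \<le> V (Suc j) * \<bar>t - t0\<bar>"
      by (rule mvt_abs[where f="f j" and f'="f (Suc j)", OF d is_interval_cc P1 tS]) (use tm in \<open>auto simp: V_def\<close>)
    also have "\<dots> \<le> (C / L) * V j * (L / (2 * C))"
      using j(2) tt V0[of j] C L by (intro mult_mono) auto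
    also have "\<dots> = V j / 2" using C L by (simp add: field_simps)
    finally have "\<bar>f j t - f j t0\<bar> \<le> V j / 2" .
    moreover have "sg * f j t = sg * f j t0 + sg * (f j t - f j t0)" by (simp add: algebra_simps)
    moreover have "\<bar>sg * (f j t - f j t0)\<bar> = \<bar>f j t - f j t0\<bar>" by (simp add: sg_def abs_mult)
    ultimately show "sg * f j t \<ge> V j / 2" using sgv abs_le_D2[of "sg * (f j t - f j t0)" "V j / 2"] by linarith
  qed
  show ?thesis using j(1) P1 P2 P3 P4 by blast
qed


definition phid :: "(real \<Rightarrow> real) \<Rightarrow> nat \<Rightarrow> real \<Rightarrow> real" where
  "phid \<phi> j = (deriv ^^ j) \<phi>"

lemma phid_0 [simp]: "phid \<phi> 0 = \<phi>" by (simp add: phid_def)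
lemma phid_Suc: "phid \<phi> (Suc j) = deriv (phid \<phi> j)" by (simp add: phid_def)

lemma diffs_iter: "(diffs ^^ j) c n = fact (n + j) / fact n * (c (n + j) :: real)"
proof (induction j arbitrary: n)
  case 0 thus ?case by simp
next
  case (Suc j)
  have "(diffs ^^ Suc j) c n = of_nat (Suc n) * (diffs ^^ j) c (Suc n)"
    by (simp add: diffs_def)
  also have "\<dots> = of_nat (Suc n) * (fact (Suc n + j) / fact (Suc n) * c (Suc n + j))"
    by (simp add: Suc)
  also have "\<dots> = fact (n + Suc j) / fact n * c (n + Suc j)"
  proof -
    have "fact (Suc n) = (of_nat (Suc n) * fact n :: real)" by (rule fact_Suc)
    moreover have "Suc n + j = n + Suc j" by simp
    ultimately show ?thesis by (simp del: of_nat_Suc fact_Suc)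
  qed
  finally show ?case .
qed

lemma fact_ratio_bound: "fact (n + j) / fact n \<le> (fact j * 2 ^ (n + j) :: real)"
proof -
  have "fact j * fact (n + j - j) * ((n + j) choose j) = (fact (n + j) :: nat)"
    by (rule binomial_fact_lemma) simp
  hence e: "fact (n + j) = (fact j * fact n * ((n + j) choose j) :: real)"
    by (metis add_diff_cancel_right' of_nat_fact of_nat_mult)
  have "real ((n + j) choose j) \<le> 2 ^ (n + j)"
    using binomial_le_pow2[of "n+j" j] by (metis of_nat_le_iff of_nat_numeral of_nat_power)
  hence "fact j * fact n * real ((n + j) choose j) \<le> fact j * fact n * 2 ^ (n + j)"
    by (intro mult_left_mono) auto
  thus ?thesis using e by (simp add: field_simps)
qed

lemma ps_local:
  fixes \<phi> :: "real \<Rightarrow> real"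
  assumes r: "r > 0" and ps: "\<And>y. \<bar>y - x0\<bar> < r \<Longrightarrow> (\<lambda>n. c n * (y - x0) ^ n) sums \<phi> y"
  shows "\<And>j y. \<bar>y - x0\<bar> < r \<Longrightarrow> (\<lambda>n. (diffs ^^ j) c n * (y - x0) ^ n) sums phid \<phi> j y
            \<and> (phid \<phi> j has_real_derivative phid \<phi> (Suc j) y) (at y)"
proof -
  have summ: "summable (\<lambda>n. (diffs ^^ j) c n * z ^ n)" if "\<bar>z\<bar> < r" for j z
    using that
  proof (induction j arbitrary: z)
    case 0
    have "\<bar>(z + x0) - x0\<bar> < r" using 0 by simp
    from ps[OF this] show ?case by (simp add: sums_iff)
  next
    case (Suc j)
    have "summable (\<lambda>n. diffs ((diffs ^^ j) c) n * z ^ n)"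
      by (rule termdiff_converges[of z r]) (use Suc in auto)
    thus ?case by simp
  qed
  define P where "P j z = (\<Sum>n. (diffs ^^ j) c n * z ^ n)" for j z
  have dP: "(P j has_real_derivative P (Suc j) z) (at z)" if "\<bar>z\<bar> < r" for j z
  proof -
    have "((\<lambda>z. \<Sum>n. (diffs ^^ j) c n * z ^ n) has_field_derivative (\<Sum>n. diffs ((diffs ^^ j) c) n * z ^ n)) (at z)"
      by (rule termdiffs_strong'[of r]) (use summ that in auto)
    thus ?thesis by (simp add: P_def[abs_def])
  qed
  have eq: "\<forall>y. \<bar>y - x0\<bar> < r \<longrightarrow> phid \<phi> j y = P j (y - x0)" for j
  proof (induction j)
    case 0
    show ?case using ps by (auto simp: P_def sums_iff)
  next
    case (Suc j)
    show ?case
    proof (intro allI impI)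
      fix y assume y: "\<bar>y - x0\<bar> < r"
      have d1: "((\<lambda>y. P j (y - x0)) has_real_derivative P (Suc j) (y - x0)) (at y)"
      proof -
        have dP': "(P j has_real_derivative P (Suc j) (y - x0)) (at (y - x0))" using dP y by simp
        have dg: "((\<lambda>y. y - x0) has_real_derivative 1) (at y)" by (auto intro!: derivative_eq_intros)
        show ?thesis using DERIV_chain2[OF dP' dg] by simp
      qed
      have "(phid \<phi> j has_real_derivative P (Suc j) (y - x0)) (at y)"
      proof (rule has_field_derivative_transform_within_open[OF d1, of "ball x0 r"])
        show "open (ball x0 r)" by simp
        show "y \<in> ball x0 r" using y by (simp add: dist_real_def abs_minus_commute)
        fix x assume "x \<in> ball x0 r"
        thus "P j (x - x0) = phid \<phi> j x" using Suc by (simp add: dist_real_def abs_minus_commute)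
      qed
      thus "phid \<phi> (Suc j) y = P (Suc j) (y - x0)"
        by (simp add: phid_Suc DERIV_imp_deriv)
    qed
  qed
  fix j y assume y: "\<bar>y - x0\<bar> < r"
  have s: "(\<lambda>n. (diffs ^^ j) c n * (y - x0) ^ n) sums phid \<phi> j y"
    using eq[of j] y summ[of "y - x0" j] by (simp add: P_def summable_sums)
  have d1: "((\<lambda>y. P j (y - x0)) has_real_derivative P (Suc j) (y - x0)) (at y)"
  proof -
    have dP': "(P j has_real_derivative P (Suc j) (y - x0)) (at (y - x0))" using dP y by simp
    have dg: "((\<lambda>y. y - x0) has_real_derivative 1) (at y)" by (auto intro!: derivative_eq_intros)
        show ?thesis using DERIV_chain2[OF dP' dg] by simp
  qed
  have "(phid \<phi> j has_real_derivative P (Suc j) (y - x0)) (at y)"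
  proof (rule has_field_derivative_transform_within_open[OF d1, of "ball x0 r"])
    show "open (ball x0 r)" by simp
    show "y \<in> ball x0 r" using y by (simp add: dist_real_def abs_minus_commute)
    fix x assume "x \<in> ball x0 r"
    thus "P j (x - x0) = phid \<phi> j x" using eq[of j] by (simp add: dist_real_def abs_minus_commute)
  qed
  hence "(phid \<phi> j has_real_derivative phid \<phi> (Suc j) y) (at y)"
    using eq[of "Suc j"] y by simp
  with s show "(\<lambda>n. (diffs ^^ j) c n * (y - x0) ^ n) sums phid \<phi> j y
            \<and> (phid \<phi> j has_real_derivative phid \<phi> (Suc j) y) (at y)" by simp
qed


lemma sums_abs_le:
  fixes f g :: "nat \<Rightarrow> real"
  assumes "f sums S" "g sums G" "\<And>n. \<bar>f n\<bar> \<le> g n"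
  shows "\<bar>S\<bar> \<le> G"
proof -
  have "S \<le> G" by (rule sums_le[OF _ assms(1,2)]) (use assms(3) abs_le_D1 in blast)
  moreover have "-G \<le> S"
    by (rule sums_le[OF _ sums_minus[OF assms(2)] assms(1)]) (use assms(3) in \<open>metis abs_le_D2 minus_le_iff\<close>)
  ultimately show ?thesis by linarith
qed

lemma local_bound:
  fixes \<phi> :: "real \<Rightarrow> real"
  assumes r: "r > 0" and ps: "\<And>y. \<bar>y - x0\<bar> < r \<Longrightarrow> (\<lambda>n. c n * (y - x0) ^ n) sums \<phi> y"
  shows "\<exists>M>0. \<forall>j y. \<bar>y - x0\<bar> < r / 8 \<longrightarrow> \<bar>phid \<phi> j y\<bar> \<le> M * fact j / (r / 4) ^ j"
proof -
  define \<rho> where "\<rho> = r / 2"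
  have \<rho>: "\<rho> > 0" using r by (simp add: \<rho>_def)
  have "\<bar>(x0 + \<rho>) - x0\<bar> < r" using r by (simp add: \<rho>_def)
  from ps[OF this] have "summable (\<lambda>n. c n * \<rho> ^ n)" by (simp add: sums_iff)
  hence "(\<lambda>n. c n * \<rho> ^ n) \<longlonglongrightarrow> 0" by (rule summable_LIMSEQ_zero)
  hence "Bseq (\<lambda>n. c n * \<rho> ^ n)" by (rule convergent_imp_Bseq[OF convergentI])
  then obtain B where B: "B > 0" "\<And>n. \<bar>c n * \<rho> ^ n\<bar> \<le> B" unfolding Bseq_def by auto
  have cB: "\<bar>c n\<bar> \<le> B / \<rho> ^ n" for n
    using B(2)[of n] \<rho> by (simp add: abs_mult field_simps)
  show ?thesis
  proof (intro exI[of _ "2 * B"] conjI allI impI)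
    show "2 * B > 0" using B by simp
    fix j y assume y: "\<bar>y - x0\<bar> < r / 8"
    have yr: "\<bar>y - x0\<bar> < r" using y r by simp
    have s: "(\<lambda>n. (diffs ^^ j) c n * (y - x0) ^ n) sums phid \<phi> j y"
      using ps_local[OF r ps yr] by blast
    define g where "g n = B * fact j * (2 / \<rho>) ^ j * (1 / 2) ^ n" for n
    have gs: "g sums (2 * B * fact j / (r / 4) ^ j)"
    proof -
      have "(\<lambda>n. (1/2::real) ^ n) sums 2" using geometric_sums[of "1/2::real"] by simp
      from sums_mult[OF this, of "B * fact j * (2 / \<rho>) ^ j"]
      have "g sums (B * fact j * (2 / \<rho>) ^ j * 2)" by (simp add: g_def[abs_def])
      moreover have "B * fact j * (2 / \<rho>) ^ j * 2 = 2 * B * fact j / (r / 4) ^ j"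
        by (simp add: \<rho>_def field_simps power_divide)
      ultimately show ?thesis by simp
    qed
    have tb: "\<bar>(diffs ^^ j) c n * (y - x0) ^ n\<bar> \<le> g n" for n
    proof -
      have "\<bar>(diffs ^^ j) c n * (y - x0) ^ n\<bar> = fact (n + j) / fact n * \<bar>c (n + j)\<bar> * \<bar>y - x0\<bar> ^ n"
        by (simp add: diffs_iter abs_mult power_abs)
      also have "\<dots> \<le> (fact j * 2 ^ (n + j)) * (B / \<rho> ^ (n + j)) * (\<rho> / 4) ^ n"
      proof (intro mult_mono fact_ratio_bound cB)
        show "\<bar>y - x0\<bar> ^ n \<le> (\<rho> / 4) ^ n" using y by (intro power_mono) (auto simp: \<rho>_def)
      qed (use B \<rho> in auto)
      also have "\<dots> = g n"
      proof -
        have four: "(4::real) ^ n = 2 ^ n * 2 ^ n" by (simp flip: power_mult_distrib)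
        show ?thesis using \<rho> by (simp add: g_def field_simps power_add power_divide four)
      qed
      finally show ?thesis .
    qed
    show "\<bar>phid \<phi> j y\<bar> \<le> 2 * B * fact j / (r / 4) ^ j"
      by (rule sums_abs_le[OF s gs tb])
  qed
qed


lemma phid_periodic:
  assumes per: "\<And>x. \<phi> (x + 1) = \<phi> x"
    and d: "\<And>j x. (phid \<phi> j has_real_derivative phid \<phi> (Suc j) x) (at x)"
  shows "phid \<phi> j (x + 1) = phid \<phi> j x"
proof (induction j arbitrary: x)
  case 0 thus ?case using per by simp
next
  case (Suc j)
  have "(phid \<phi> j has_real_derivative phid \<phi> (Suc j) (x + 1)) (at (x + 1))" by (rule d)
  hence "((\<lambda>y. phid \<phi> j (y + 1)) has_real_derivative phid \<phi> (Suc j) (x + 1)) (at x)"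
    by (simp add: DERIV_shift)
  moreover have "(\<lambda>y. phid \<phi> j (y + 1)) = phid \<phi> j" using Suc by auto
  ultimately have "(phid \<phi> j has_real_derivative phid \<phi> (Suc j) (x + 1)) (at x)" by simp
  moreover have "(phid \<phi> j has_real_derivative phid \<phi> (Suc j) x) (at x)" by (rule d)
  ultimately show ?case by (rule DERIV_unique)
qed

lemma periodic_reduce:
  fixes g :: "real \<Rightarrow> real"
  assumes "\<And>x. g (x + 1) = g x"
  shows "g x = g (x - of_int \<lfloor>x\<rfloor>)"
proof -
  have n: "g (y + of_nat n) = g y" for y n
  proof (induction n)
    case 0 thus ?case by simp
  next
    case (Suc n)
    have "g (y + of_nat (Suc n)) = g ((y + of_nat n) + 1)" by (simp add: algebra_simps)
    thus ?case using assms Suc by simp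
  qed
  show ?thesis
  proof (cases "\<lfloor>x\<rfloor> \<ge> 0")
    case True
    have "x = (x - of_int \<lfloor>x\<rfloor>) + of_nat (nat \<lfloor>x\<rfloor>)" using True by simp
    thus ?thesis using n by metis
  next
    case False
    have "x - of_int \<lfloor>x\<rfloor> = x + of_nat (nat (- \<lfloor>x\<rfloor>))" using False by simp
    thus ?thesis using n by metis
  qed
qed

lemma phi_bounds:
  fixes \<phi> :: "real \<Rightarrow> real"
  assumes an: "real_analytic_on UNIV \<phi>" and per: "\<And>x. \<phi> (x + 1) = \<phi> x"
  shows "\<exists>M R. M > 0 \<and> R > 0 \<and> (\<forall>j x. \<bar>phid \<phi> j x\<bar> \<le> M * fact j / R ^ j)
           \<and> (\<forall>j x. (phid \<phi> j has_real_derivative phid \<phi> (Suc j) x) (at x))"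
proof -
  have loc: "\<exists>r>0. \<exists>c. \<forall>y. \<bar>y - x0\<bar> < r \<longrightarrow> (\<lambda>n. c n * (y - x0) ^ n) sums \<phi> y" for x0
    using an unfolding real_analytic_on_def by blast
  have d: "(phid \<phi> j has_real_derivative phid \<phi> (Suc j) x) (at x)" for j x
  proof -
    obtain r c where r: "r > 0" "\<And>y. \<bar>y - x\<bar> < r \<Longrightarrow> (\<lambda>n. c n * (y - x) ^ n) sums \<phi> y"
      using loc[of x] by blast
    show ?thesis using ps_local[OF r, of x j] r(1) by simp
  qed
  have lb: "\<exists>r>0. \<exists>M>0. \<forall>j y. \<bar>y - x0\<bar> < r \<longrightarrow> \<bar>phid \<phi> j y\<bar> \<le> M * fact j / r ^ j" for x0
  proof -
    obtain r c where r: "r > 0" "\<And>y. \<bar>y - x0\<bar> < r \<Longrightarrow> (\<lambda>n. c n * (y - x0) ^ n) sums \<phi> y"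
      using loc[of x0] by blast
    obtain M where M: "M > 0" "\<And>j y. \<bar>y - x0\<bar> < r / 8 \<Longrightarrow> \<bar>phid \<phi> j y\<bar> \<le> M * fact j / (r / 4) ^ j"
      using local_bound[OF r] by blast
    have "\<forall>j y. \<bar>y - x0\<bar> < r / 8 \<longrightarrow> \<bar>phid \<phi> j y\<bar> \<le> M * fact j / (r / 8) ^ j"
    proof (intro allI impI)
      fix j y assume y: "\<bar>y - x0\<bar> < r / 8"
      have "M * fact j / (r / 4) ^ j \<le> M * fact j / (r / 8) ^ j"
        using r M by (intro divide_left_mono power_mono mult_pos_pos) auto
      thus "\<bar>phid \<phi> j y\<bar> \<le> M * fact j / (r / 8) ^ j" using M(2)[OF y, of j] by linarith
    qed
    moreover have "r / 8 > 0" using r by simp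
    ultimately show ?thesis using M(1) by blast
  qed
  then obtain rr MM where rr: "\<And>x0. rr x0 > 0" "\<And>x0. MM x0 > 0"
    "\<And>x0 j y. \<bar>y - x0\<bar> < rr x0 \<Longrightarrow> \<bar>phid \<phi> j y\<bar> \<le> MM x0 * fact j / rr x0 ^ j"
    by metis
  have cov: "{0..1::real} \<subseteq> (\<Union>x0\<in>{0..1}. ball x0 (rr x0))"
  proof
    fix x :: real assume "x \<in> {0..1}"
    thus "x \<in> (\<Union>x0\<in>{0..1}. ball x0 (rr x0))" using rr(1)[of x] by (intro UN_I[of x]) auto
  qed
  obtain F where F: "F \<subseteq> {0..1}" "finite F" "{0..1::real} \<subseteq> (\<Union>x0\<in>F. ball x0 (rr x0))"
    using compactE_image[OF compact_Icc _ cov] by blast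
  have Fne: "F \<noteq> {}" using F(3) by auto
  define R where "R = Min (rr ` F)"
  define M where "M = Max (MM ` F)"
  have R: "R > 0" using F Fne rr(1) by (simp add: R_def)
  have M: "M > 0" using F Fne rr(2) by (auto simp: M_def Max_gr_iff)
  have b01: "\<bar>phid \<phi> j y\<bar> \<le> M * fact j / R ^ j" if y: "y \<in> {0..1}" for j y
  proof -
    obtain x0 where x0: "x0 \<in> F" "y \<in> ball x0 (rr x0)" using F(3) y by blast
    have "\<bar>phid \<phi> j y\<bar> \<le> MM x0 * fact j / rr x0 ^ j"
      by (rule rr(3)) (use x0 in \<open>simp add: dist_real_def abs_minus_commute\<close>)
    also have "\<dots> \<le> M * fact j / R ^ j"
    proof (intro frac_le mult_right_mono power_mono)
      show "MM x0 \<le> M" using F x0 by (simp add: M_def)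
      show "R \<le> rr x0" using F x0 by (simp add: R_def)
    qed (use R M rr in auto)
    finally show ?thesis .
  qed
  have "\<bar>phid \<phi> j x\<bar> \<le> M * fact j / R ^ j" for j x
  proof -
    have "phid \<phi> j x = phid \<phi> j (x - of_int \<lfloor>x\<rfloor>)"
      by (rule periodic_reduce) (rule phid_periodic[OF per d])
    moreover have "x - of_int \<lfloor>x\<rfloor> \<in> {0..1}"
      using floor_correct[of x] by (simp add: algebra_simps)
    ultimately show ?thesis using b01 by simp
  qed
  thus ?thesis using M R d by blast
qed


definition Pre :: "nat \<Rightarrow> (nat \<Rightarrow> nat) \<Rightarrow> nat \<Rightarrow> real" where
  "Pre b u n = (\<Sum>k=1..n. real (u k) * real b ^ (k - 1))"

definition Aarg :: "nat \<Rightarrow> (nat \<Rightarrow> nat) \<Rightarrow> nat \<Rightarrow> real \<Rightarrow> real" where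
  "Aarg b u s x = (x + Pre b u (Suc s)) / real b ^ Suc s"

locale YS =
  fixes b :: nat and lam :: real and \<phi> :: "real \<Rightarrow> real" and Bd :: "nat \<Rightarrow> real"
  assumes b2: "b \<ge> 2" and lam1: "1 / real b < lam" and lam2: "lam < 1"
    and phib: "\<And>j x. \<bar>phid \<phi> j x\<bar> \<le> Bd j"
    and phid_d: "\<And>j x. (phid \<phi> j has_real_derivative phid \<phi> (Suc j) x) (at x)"
begin

definition gam :: real where "gam = 1 / (real b * lam)"

definition Yterm :: "nat \<Rightarrow> (nat \<Rightarrow> nat) \<Rightarrow> real \<Rightarrow> nat \<Rightarrow> real" where
  "Yterm j u x s = gam ^ Suc s * (1 / real b ^ Suc s) ^ j * phid \<phi> (Suc j) (Aarg b u s x)"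

definition Yd :: "nat \<Rightarrow> (nat \<Rightarrow> nat) \<Rightarrow> real \<Rightarrow> real" where
  "Yd j u x = - (\<Sum>s. Yterm j u x s)"

lemma bpos: "real b > 0" using b2 by simp
lemma lampos: "lam > 0" using lam1 bpos by (smt (verit) divide_pos_pos)
lemma gam_pos: "gam > 0" using bpos lampos by (simp add: gam_def)
lemma gam_lt1: "gam < 1"
proof -
  have "1 < real b * lam" using lam1 bpos by (simp add: field_simps)
  thus ?thesis by (simp add: gam_def)
qed
lemma gam_gt: "gam > 1 / real b"
proof -
  have "real b * lam < real b * 1" using lam2 bpos by simp
  thus ?thesis using bpos lampos by (simp add: gam_def field_simps)
qed

lemma Bd_nonneg: "Bd j \<ge> 0" using phib[of j 0] by linarith

lemma inv_pow_le1: "(1 / real b ^ n) ^ j \<le> 1"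
  using bpos b2 by (simp add: power_le_one)

lemma Yterm_bound: "\<bar>Yterm j u x s\<bar> \<le> gam ^ Suc s * Bd (Suc j)"
proof -
  have "\<bar>Yterm j u x s\<bar> = gam ^ Suc s * (1 / real b ^ Suc s) ^ j * \<bar>phid \<phi> (Suc j) (Aarg b u s x)\<bar>"
    using gam_pos bpos by (simp add: Yterm_def abs_mult)
  also have "\<dots> \<le> gam ^ Suc s * 1 * Bd (Suc j)"
    by (intro mult_mono inv_pow_le1 phib) (use gam_pos bpos Bd_nonneg in auto)
  finally show ?thesis by simp
qed

lemma geo_sums: "(\<lambda>s. gam ^ Suc s * B) sums (gam / (1 - gam) * B)"
proof -
  have "(\<lambda>s. gam ^ s) sums (1 / (1 - gam))" using geometric_sums[of gam] gam_pos gam_lt1 by simp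
  from sums_mult[OF this, of "gam * B"] show ?thesis by (simp add: field_simps)
qed

lemma Yterm_summable: "summable (Yterm j u x)"
  by (rule summable_comparison_test[OF _ sums_summable[OF geo_sums[of "Bd (Suc j)"]]])
     (use Yterm_bound in auto)

lemma Yd_bound: "\<bar>Yd j u x\<bar> \<le> gam / (1 - gam) * Bd (Suc j)"
proof -
  have "\<bar>\<Sum>s. Yterm j u x s\<bar> \<le> gam / (1 - gam) * Bd (Suc j)"
    by (rule sums_abs_le[OF summable_sums[OF Yterm_summable] geo_sums Yterm_bound])
  thus ?thesis by (simp add: Yd_def)
qed

lemma Aarg_deriv: "((\<lambda>x. Aarg b u s x) has_real_derivative (1 / real b ^ Suc s)) (at x)"
  unfolding Aarg_def using bpos by (auto intro!: derivative_eq_intros)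

lemma Yterm_deriv: "((\<lambda>x. Yterm j u x s) has_real_derivative Yterm (Suc j) u x s) (at x)"
proof -
  have "((\<lambda>x. phid \<phi> (Suc j) (Aarg b u s x)) has_real_derivative
         phid \<phi> (Suc (Suc j)) (Aarg b u s x) * (1 / real b ^ Suc s)) (at x)"
    by (rule DERIV_chain2[OF phid_d Aarg_deriv])
  hence "((\<lambda>x. gam ^ Suc s * (1 / real b ^ Suc s) ^ j * phid \<phi> (Suc j) (Aarg b u s x)) has_real_derivative
      gam ^ Suc s * (1 / real b ^ Suc s) ^ j * (phid \<phi> (Suc (Suc j)) (Aarg b u s x) * (1 / real b ^ Suc s))) (at x)"
    by (rule DERIV_cmult)
  thus ?thesis by (simp add: Yterm_def algebra_simps)
qed

lemma Yd_deriv: "(Yd j u has_real_derivative Yd (Suc j) u x) (at x)"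
proof -
  have "((\<lambda>x. \<Sum>s. Yterm j u x s) has_field_derivative (\<Sum>s. Yterm (Suc j) u x s)) (at x)"
  proof -
    have uc: "uniformly_convergent_on UNIV (\<lambda>n x. \<Sum>i<n. Yterm (Suc j) u x i)"
      by (rule Weierstrass_m_test'[OF _ sums_summable[OF geo_sums[of "Bd (Suc (Suc j))"]]]) (use Yterm_bound in auto)
    have dd: "\<And>n y. y \<in> UNIV \<Longrightarrow> ((\<lambda>x. Yterm j u x n) has_field_derivative Yterm (Suc j) u y n) (at y within UNIV)"
      using Yterm_deriv by simp
    show ?thesis
      using has_field_derivative_series'(2)[of UNIV "\<lambda>s x. Yterm j u x s" "\<lambda>s x. Yterm (Suc j) u x s" 0 x, OF _ dd uc]
        Yterm_summable by simp
  qed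
  hence "((\<lambda>x. - (\<Sum>s. Yterm j u x s)) has_field_derivative - (\<Sum>s. Yterm (Suc j) u x s)) (at x)"
    by (rule DERIV_minus)
  thus ?thesis by (simp add: Yd_def[abs_def])
qed

end

lemma Aarg_alt:
  assumes "b > 0"
  shows "Aarg b u s x = x / real b ^ Suc s + (\<Sum>k=1..Suc s. real (u k) / real b ^ (Suc s + 1 - k))"
proof -
  have "Pre b u (Suc s) / real b ^ Suc s = (\<Sum>k=1..Suc s. real (u k) / real b ^ (Suc s + 1 - k))"
    unfolding Pre_def sum_divide_distrib
  proof (rule sum.cong[OF refl])
    fix k assume k: "k \<in> {1..Suc s}"
    have "real b ^ Suc s = real b ^ (k - 1) * real b ^ (Suc s + 1 - k)"
      using k by (simp flip: power_add)
    thus "real (u k) * real b ^ (k - 1) / real b ^ Suc s = real (u k) / real b ^ (Suc s + 1 - k)"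
      using assms by (simp add: field_simps)
  qed
  thus ?thesis by (simp add: Aarg_def add_divide_distrib)
qed

lemma (in YS) Yd_0: "Yd 0 u x = Yfun b lam \<phi> x u"
  unfolding Yd_def Yfun_def Yterm_def gam_def
  using Aarg_alt[of b u] bpos by (simp add: phid_def)


lemma small_all_zero:
  fixes a M :: real
  assumes M: "M > 0" and h: "\<And>N. N > 0 \<Longrightarrow> \<bar>a\<bar> \<le> M / 2 ^ N"
  shows "a = 0"
proof (rule ccontr)
  assume "a \<noteq> 0"
  hence pos: "\<bar>a\<bar> / M > 0" using M by simp
  obtain N where N: "(1/2::real) ^ N < \<bar>a\<bar> / M" using real_arch_pow_inv[OF pos, of "1/2"] by auto
  have "(1/2::real) ^ Suc N \<le> (1/2) ^ N" by (simp add: power_le_one)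
  hence "(1/2::real) ^ Suc N < \<bar>a\<bar> / M" using N by linarith
  hence "M / 2 ^ Suc N < \<bar>a\<bar>" using M by (simp add: field_simps power_divide)
  thus False using h[of "Suc N"] by simp
qed

lemma identity_local:
  fixes f :: "nat \<Rightarrow> real \<Rightarrow> real"
  assumes d: "\<And>i x. (f i has_real_derivative f (Suc i) x) (at x)"
    and M: "M > 0" and R: "R > 0"
    and bnd: "\<And>n x. \<bar>f n x\<bar> \<le> M * fact (Suc n) / R ^ n"
    and z: "\<And>n. f n x0 = 0"
    and y: "\<bar>y - x0\<bar> < R / 4"
  shows "f 0 y = 0"
proof (cases "y = x0")
  case True thus ?thesis using z by simp
next
  case False
  show ?thesis
  proof (rule small_all_zero[OF M])
    fix N :: nat assume N: "N > 0"
    obtain t where t: "f 0 y = (\<Sum>m<N. (f m x0 / fact m) * (y - x0)^m) + (f N t / fact N) * (y - x0)^N"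
      using Taylor[of N f "f 0" "min y x0" "max y x0" x0 y] N d False by auto
    hence "f 0 y = (f N t / fact N) * (y - x0)^N" using z by simp
    hence "\<bar>f 0 y\<bar> = \<bar>f N t\<bar> / fact N * \<bar>y - x0\<bar> ^ N" by (simp add: abs_mult power_abs)
    also have "\<dots> \<le> (M * fact (Suc N) / R ^ N) / fact N * (R / 4) ^ N"
      using y bnd[of N t] R M by (intro mult_mono divide_right_mono power_mono) auto
    also have "\<dots> = M * real (Suc N) / 4 ^ N"
      using R by (simp add: field_simps power_divide del: of_nat_Suc)
    also have "\<dots> \<le> M * 2 ^ N / 4 ^ N"
    proof -
      have "real (Suc N) \<le> 2 ^ N"
      proof -
        have "Suc N \<le> 2 ^ N" using N
        proof (induction N)
          case (Suc n) thus ?case by (cases n) auto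
        qed simp
        thus ?thesis by (metis of_nat_le_iff of_nat_numeral of_nat_power)
      qed
      thus ?thesis using M by (intro divide_right_mono mult_left_mono) auto
    qed
    also have "\<dots> = M / 2 ^ N"
    proof -
      have four: "(4::real) ^ N = 2 ^ N * 2 ^ N" by (simp flip: power_mult_distrib)
      show ?thesis by (simp add: four)
    qed
    finally show "\<bar>f 0 y\<bar> \<le> M / 2 ^ N" .
  qed
qed

lemma identity_ball:
  fixes f :: "nat \<Rightarrow> real \<Rightarrow> real"
  assumes d: "\<And>i x. (f i has_real_derivative f (Suc i) x) (at x)"
    and M: "M > 0" and R: "R > 0"
    and bnd: "\<And>n x. \<bar>f n x\<bar> \<le> M * fact (Suc n) / R ^ n"
    and z: "\<And>n. f n x0 = 0"
    and y: "\<bar>y - x0\<bar> < R / 4"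
  shows "f n y = 0"
proof -
  have "\<forall>y\<in>ball x0 (R/4). f n y = 0"
  proof (induction n)
    case 0 thus ?case using identity_local[OF d M R bnd z] by (simp add: dist_real_def abs_minus_commute)
  next
    case (Suc n)
    show ?case
    proof
      fix y assume yb: "y \<in> ball x0 (R/4)"
      have "((\<lambda>_. 0) has_real_derivative f (Suc n) y) (at y)"
        by (rule has_field_derivative_transform_within_open[OF d[of n y] open_ball yb]) (use Suc in auto)
      moreover have "((\<lambda>_. 0) has_real_derivative 0) (at y)" by simp
      ultimately show "f (Suc n) y = 0" by (rule DERIV_unique)
    qed
  qed
  thus ?thesis using y by (simp add: dist_real_def abs_minus_commute)
qed

lemma identity_thm:
  fixes f :: "nat \<Rightarrow> real \<Rightarrow> real"
  assumes d: "\<And>i x. (f i has_real_derivative f (Suc i) x) (at x)"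
    and M: "M > 0" and R: "R > 0"
    and bnd: "\<And>n x. \<bar>f n x\<bar> \<le> M * fact (Suc n) / R ^ n"
    and z: "\<And>n. f n x0 = 0"
  shows "f 0 y = 0"
proof -
  have ind: "\<forall>y. \<bar>y - x0\<bar> \<le> real N * (R / 8) \<longrightarrow> (\<forall>n. f n y = 0)" for N
  proof (induction N)
    case 0
    show ?case using z by simp
  next
    case (Suc N)
    show ?case
    proof (intro allI impI)
      fix y n assume y: "\<bar>y - x0\<bar> \<le> real (Suc N) * (R / 8)"
      define y' where "y' = x0 + (y - x0) * real N / real (Suc N)"
      have "\<bar>y' - x0\<bar> = \<bar>y - x0\<bar> * real N / real (Suc N)" by (simp add: y'_def abs_mult)
      also have "\<dots> \<le> real (Suc N) * (R / 8) * real N / real (Suc N)"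
        using y by (intro divide_right_mono mult_right_mono) auto
      also have "\<dots> = real N * (R / 8)" by (simp del: of_nat_Suc)
      finally have z': "\<And>n. f n y' = 0" using Suc by blast
      have "\<bar>y - y'\<bar> = \<bar>y - x0\<bar> / real (Suc N)"
        by (simp add: y'_def field_simps abs_divide del: of_nat_Suc) (simp add: algebra_simps)
      also have "\<dots> \<le> R / 8" using y by (simp add: field_simps del: of_nat_Suc)
      also have "\<dots> < R / 4" using R by simp
      finally show "f n y = 0" by (rule identity_ball[OF d M R bnd z'])
    qed
  qed
  obtain N where "\<bar>y - x0\<bar> / (R / 8) \<le> real N" using real_arch_simple by blast
  hence "\<bar>y - x0\<bar> \<le> real N * (R / 8)" using R by (simp add: field_simps)
  thus ?thesis using ind by blast
qed


context YS begin

definition Gd :: "nat \<Rightarrow> (nat \<Rightarrow> nat) \<Rightarrow> (nat \<Rightarrow> nat) \<Rightarrow> real \<Rightarrow> real" where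
  "Gd j u v x = Yd j u x - Yd j v x"

lemma Gd_deriv: "(Gd j u v has_real_derivative Gd (Suc j) u v x) (at x)"
  unfolding Gd_def[abs_def] by (intro DERIV_diff Yd_deriv)

lemma Gd_bound: "\<bar>Gd j u v x\<bar> \<le> 2 * (gam / (1 - gam) * Bd (Suc j))"
  unfolding Gd_def using Yd_bound[of j u x] Yd_bound[of j v x] by linarith

lemma nonvanish:
  assumes BdM: "\<And>j. Bd j = M1 * fact j / R ^ j" and M1: "M1 > 0" and R: "R > 0"
    and H: "condH b lam \<phi>" and u: "u \<in> Sigma b" and v: "v \<in> Sigma b" and uv: "u \<noteq> v"
  shows "\<exists>n. Gd n u v x \<noteq> 0"
proof (rule ccontr)
  assume "\<not> ?thesis"
  hence z: "\<And>n. Gd n u v x = 0" by blast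
  define M2 where "M2 = 2 * (gam / (1 - gam)) * M1 / R"
  have M2: "M2 > 0" using gam_pos gam_lt1 M1 R by (simp add: M2_def)
  have bnd: "\<bar>Gd n u v y\<bar> \<le> M2 * fact (Suc n) / R ^ n" for n y
  proof -
    have "2 * (gam / (1 - gam) * Bd (Suc n)) = M2 * fact (Suc n) / R ^ n"
      using R by (simp add: BdM M2_def field_simps del: fact_Suc)
    thus ?thesis using Gd_bound[of n u v y] by simp
  qed
  have "\<And>y. Gd 0 u v y = 0"
    by (rule identity_thm[where f="\<lambda>n. Gd n u v", OF Gd_deriv M2 R bnd z])
  hence "\<And>y. Yfun b lam \<phi> y v - Yfun b lam \<phi> y u = 0" by (simp add: Gd_def Yd_0)
  moreover have "\<exists>y. Yfun b lam \<phi> y v - Yfun b lam \<phi> y u \<noteq> 0"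
    using H u v uv unfolding condH_def by blast
  ultimately show False by simp
qed

lemma phid_cont: "continuous_on UNIV (phid \<phi> j)"
  by (rule continuous_at_imp_continuous_on) (use phid_d DERIV_isCont in blast)

lemma Yterm_cont: "continuous_on UNIV (\<lambda>q::(nat \<Rightarrow> nat) \<times> real. Yterm j (fst q) (snd q) s)"
proof -
  have c1: "continuous_on UNIV (\<lambda>q::(nat \<Rightarrow> nat) \<times> real. real (fst q k))" for k
  proof -
    have "continuous_on UNIV (\<lambda>q::(nat \<Rightarrow> nat) \<times> real. fst q k)"
      by (rule continuous_on_compose2[OF continuous_on_product_coordinates[of k] continuous_on_fst[OF continuous_on_id]]) auto
    moreover have "continuous_on UNIV (real :: nat \<Rightarrow> real)" by simp
    ultimately show ?thesis using continuous_on_compose2[of UNIV "real :: nat \<Rightarrow> real" UNIV "\<lambda>q::(nat \<Rightarrow> nat) \<times> real. fst q k"] by auto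
  qed
  have c2: "continuous_on UNIV (\<lambda>q::(nat \<Rightarrow> nat) \<times> real. Aarg b (fst q) s (snd q))"
    unfolding Aarg_def Pre_def
    by (intro continuous_intros c1) (use bpos in auto)
  have c3: "continuous_on UNIV (\<lambda>q::(nat \<Rightarrow> nat) \<times> real. phid \<phi> (Suc j) (Aarg b (fst q) s (snd q)))"
    by (rule continuous_on_compose2[OF phid_cont c2]) auto
  show ?thesis unfolding Yterm_def by (intro continuous_intros c3)
qed

lemma Yd_cont: "continuous_on UNIV (\<lambda>q::(nat \<Rightarrow> nat) \<times> real. Yd j (fst q) (snd q))"
proof -
  have ul: "uniform_limit UNIV (\<lambda>n q. \<Sum>i<n. Yterm j (fst q) (snd q) i)
             (\<lambda>q. \<Sum>i. Yterm j (fst q) (snd q) i) sequentially"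
    by (rule Weierstrass_m_test[OF _ sums_summable[OF geo_sums[of "Bd (Suc j)"]]]) (use Yterm_bound in auto)
  have "continuous_on UNIV (\<lambda>q::(nat \<Rightarrow> nat) \<times> real. \<Sum>i. Yterm j (fst q) (snd q) i)"
  proof (rule uniform_limit_theorem[OF _ ul])
    have "\<And>n. continuous_on UNIV (\<lambda>q::(nat \<Rightarrow> nat) \<times> real. \<Sum>i<n. Yterm j (fst q) (snd q) i)"
      by (intro continuous_on_sum Yterm_cont)
    thus "\<forall>\<^sub>F n in sequentially. continuous_on UNIV (\<lambda>q::(nat \<Rightarrow> nat) \<times> real. \<Sum>i<n. Yterm j (fst q) (snd q) i)"
      by simp
  qed simp
  hence "continuous_on UNIV (\<lambda>q::(nat \<Rightarrow> nat) \<times> real. - (\<Sum>i. Yterm j (fst q) (snd q) i))"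
    by (rule continuous_on_minus)
  thus ?thesis by (simp add: Yd_def)
qed

definition GQ :: "nat \<Rightarrow> (nat \<Rightarrow> nat) \<times> (nat \<Rightarrow> nat) \<times> real \<Rightarrow> real" where
  "GQ j q = Gd j (fst q) (fst (snd q)) (snd (snd q))"

lemma GQ_cont: "continuous_on UNIV (GQ j)"
proof -
  have a: "continuous_on UNIV (\<lambda>q::(nat \<Rightarrow> nat) \<times> (nat \<Rightarrow> nat) \<times> real. Yd j (fst q) (snd (snd q)))"
    by (rule continuous_on_compose2[OF Yd_cont, of _ "\<lambda>q. (fst q, snd (snd q))", simplified])
       (intro continuous_intros)?
  have b: "continuous_on UNIV (\<lambda>q::(nat \<Rightarrow> nat) \<times> (nat \<Rightarrow> nat) \<times> real. Yd j (fst (snd q)) (snd (snd q)))"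
    by (rule continuous_on_compose2[OF Yd_cont, of _ "\<lambda>q. (fst (snd q), snd (snd q))", simplified])
       (intro continuous_intros)?
  show ?thesis unfolding GQ_def[abs_def] Gd_def by (intro continuous_intros a b)
qed

end

definition SigA :: "nat \<Rightarrow> nat \<Rightarrow> (nat \<Rightarrow> nat) set" where
  "SigA b a = PiE UNIV (\<lambda>k. if k = 0 then {0} else if k = 1 then {a} else {..<b})"

lemma compact_PiE_fin:
  fixes S :: "nat \<Rightarrow> nat set"
  assumes "\<And>k. finite (S k)"
  shows "compact (PiE UNIV S)"
proof -
  have "compactin (product_topology (\<lambda>i. euclidean) UNIV) (PiE UNIV S)"
    unfolding compactin_PiE using assms finite_imp_compact by auto
  thus ?thesis by (simp add: euclidean_product_topology)
qed

lemma compact_SigA: "compact (SigA b a)"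
  unfolding SigA_def by (rule compact_PiE_fin) auto



definition QQ :: "nat \<Rightarrow> ((nat \<Rightarrow> nat) \<times> (nat \<Rightarrow> nat) \<times> real) set" where
  "QQ b = {(u, v, x). u \<in> Sigma b \<and> v \<in> Sigma b \<and> u 1 \<noteq> v 1 \<and> x \<in> {0..1}}"

lemma QQ_eq: "QQ b = (\<Union>p\<in>{p. fst p < b \<and> snd p < b \<and> fst p \<noteq> snd p}. SigA b (fst p) \<times> SigA b (snd p) \<times> {0..1::real})"
proof -
  have S: "u \<in> Sigma b \<and> u 1 = a \<longleftrightarrow> u \<in> SigA b a \<and> (a < b)" for u a
    unfolding Sigma_def SigA_def PiE_def Pi_def extensional_def
    by (auto split: if_splits)
  show ?thesis
  proof (intro set_eqI iffI)
    fix q assume "q \<in> QQ b"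
    then obtain u v x where q: "q = (u, v, x)" "u \<in> Sigma b" "v \<in> Sigma b" "u 1 \<noteq> v 1" "x \<in> {0..1}"
      unfolding QQ_def by auto
    hence "u \<in> SigA b (u 1)" "v \<in> SigA b (v 1)" "u 1 < b" "v 1 < b" using S by blast+
    thus "q \<in> (\<Union>p\<in>{p. fst p < b \<and> snd p < b \<and> fst p \<noteq> snd p}. SigA b (fst p) \<times> SigA b (snd p) \<times> {0..1::real})"
      using q by (intro UN_I[of "(u 1, v 1)"]) auto
  next
    fix q assume "q \<in> (\<Union>p\<in>{p. fst p < b \<and> snd p < b \<and> fst p \<noteq> snd p}. SigA b (fst p) \<times> SigA b (snd p) \<times> {0..1::real})"
    then obtain a a' where aa: "a < b" "a' < b" "a \<noteq> a'" "q \<in> SigA b a \<times> SigA b a' \<times> {0..1::real}" by auto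
    then obtain u v x where q: "q = (u, v, x)" "u \<in> SigA b a" "v \<in> SigA b a'" "x \<in> {0..1}" by auto
    have "u \<in> Sigma b" "u 1 = a" "v \<in> Sigma b" "v 1 = a'" using S q aa by blast+
    thus "q \<in> QQ b" using q aa unfolding QQ_def by auto
  qed
qed

lemma compact_QQ: "compact (QQ b)"
proof -
  have fin: "finite {p. fst p < b \<and> snd p < b \<and> fst p \<noteq> snd p}"
    by (rule finite_subset[of _ "{..<b} \<times> {..<b}"]) auto
  show ?thesis unfolding QQ_eq
    by (rule compact_UN[OF fin]) (intro compact_Times compact_SigA compact_Icc)
qed


context YS begin

lemma uniform_nonvanish:
  assumes BdM: "\<And>j. Bd j = M1 * fact j / R ^ j" and M1: "M1 > 0" and R: "R > 0"
    and H: "condH b lam \<phi>"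
  shows "\<exists>K \<delta>. \<delta> > 0 \<and> (\<forall>q\<in>QQ b. \<exists>k\<le>K. \<bar>GQ k q\<bar> \<ge> \<delta>)"
proof -
  define Op where "Op p = {q. 1 / real (Suc (snd p)) < \<bar>GQ (fst p) q\<bar>}" for p :: "nat \<times> nat"
  have opn: "open (Op p)" for p
  proof -
    have "continuous_on UNIV (\<lambda>q. \<bar>GQ (fst p) q\<bar>)" using continuous_on_norm[OF GQ_cont[of "fst p"]] by simp
    thus ?thesis unfolding Op_def by (intro open_Collect_less continuous_on_const)
  qed
  have cov: "QQ b \<subseteq> (\<Union>p\<in>UNIV. Op p)"
  proof
    fix q assume q: "q \<in> QQ b"
    then obtain u v x where q': "q = (u, v, x)" "u \<in> Sigma b" "v \<in> Sigma b" "u 1 \<noteq> v 1"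
      unfolding QQ_def by auto
    have "u \<noteq> v" using q' by auto
    then obtain n where n: "Gd n u v x \<noteq> 0" using nonvanish[OF BdM M1 R H q'(2,3)] by blast
    hence "\<bar>GQ n q\<bar> > 0" by (simp add: GQ_def q')
    then obtain N where "inverse (real (Suc N)) < \<bar>GQ n q\<bar>" using reals_Archimedean by blast
    hence "q \<in> Op (n, N)" by (simp add: Op_def field_simps)
    thus "q \<in> (\<Union>p\<in>UNIV. Op p)" by blast
  qed
  obtain C where C: "finite C" "QQ b \<subseteq> (\<Union>p\<in>C. Op p)"
    by (rule compactE_image[OF compact_QQ opn cov]) blast
  define K where "K = Max (insert 0 (fst ` C))"
  define \<delta> where "\<delta> = Min (insert 1 ((\<lambda>p. 1 / real (Suc (snd p))) ` C))"
  have dpos: "\<delta> > 0" using C(1) by (simp add: \<delta>_def)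
  have "\<forall>q\<in>QQ b. \<exists>k\<le>K. \<bar>GQ k q\<bar> \<ge> \<delta>"
  proof
    fix q assume "q \<in> QQ b"
    then obtain p where p: "p \<in> C" "q \<in> Op p" using C by blast
    have "fst p \<le> K" using p C(1) by (simp add: K_def)
    moreover have "\<delta> \<le> 1 / real (Suc (snd p))" using p C(1) by (simp add: \<delta>_def)
    moreover have "1 / real (Suc (snd p)) < \<bar>GQ (fst p) q\<bar>" using p(2) unfolding Op_def by simp
    ultimately show "\<exists>k\<le>K. \<bar>GQ k q\<bar> \<ge> \<delta>" by (intro exI[of _ "fst p"]) simp
  qed
  thus ?thesis using dpos by blast
qed

lemma uniform_nbhd:
  assumes BdM: "\<And>j. Bd j = M1 * fact j / R ^ j" and M1: "M1 > 0" and R: "R > 0"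
    and H: "condH b lam \<phi>"
  shows "\<exists>K \<delta> \<eta>. \<delta> > 0 \<and> \<eta> > 0 \<and> (\<forall>u v x. (u, v, x) \<in> QQ b \<longrightarrow>
           (\<exists>k\<le>K. \<exists>sg::real. (sg = 1 \<or> sg = -1) \<and> (\<forall>z. \<bar>z - x\<bar> \<le> \<eta> \<longrightarrow> sg * Gd k u v z \<ge> \<delta>)))"
proof -
  obtain K \<delta> where K: "\<delta> > 0" "\<And>q. q \<in> QQ b \<Longrightarrow> \<exists>k\<le>K. \<bar>GQ k q\<bar> \<ge> \<delta>"
    using uniform_nonvanish[OF BdM M1 R H] by blast
  define HH where "HH = (\<Sum>k\<le>K. 2 * (gam / (1 - gam) * Bd (Suc (Suc k)))) + 1"
  have nn: "0 \<le> 2 * (gam / (1 - gam) * Bd (Suc (Suc k)))" for k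
    using gam_pos gam_lt1 Bd_nonneg by simp
  have HHpos: "HH > 0" unfolding HH_def using nn by (simp add: sum_nonneg add_nonneg_pos)
  have HHb: "\<bar>Gd (Suc k) u v z\<bar> \<le> HH" if "k \<le> K" for k u v z
  proof -
    have "\<bar>Gd (Suc k) u v z\<bar> \<le> 2 * (gam / (1 - gam) * Bd (Suc (Suc k)))" by (rule Gd_bound)
    also have "\<dots> \<le> (\<Sum>k\<le>K. 2 * (gam / (1 - gam) * Bd (Suc (Suc k))))"
      by (rule member_le_sum[where f="\<lambda>k. 2 * (gam / (1 - gam) * Bd (Suc (Suc k)))"]) (use that nn in auto)
    finally show ?thesis unfolding HH_def by linarith
  qed
  define \<eta> where "\<eta> = \<delta> / (2 * HH)"
  have eta: "\<eta> > 0" using K(1) HHpos by (simp add: \<eta>_def)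
  have "\<forall>u v x. (u, v, x) \<in> QQ b \<longrightarrow>
           (\<exists>k\<le>K. \<exists>sg::real. (sg = 1 \<or> sg = -1) \<and> (\<forall>z. \<bar>z - x\<bar> \<le> \<eta> \<longrightarrow> sg * Gd k u v z \<ge> \<delta> / 2))"
  proof (intro allI impI)
    fix u v x assume q: "(u, v, x) \<in> QQ b"
    obtain k where k: "k \<le> K" "\<bar>Gd k u v x\<bar> \<ge> \<delta>" using K(2)[OF q] by (auto simp: GQ_def)
    define sg :: real where "sg = (if Gd k u v x \<ge> 0 then 1 else -1)"
    have sgx: "sg * Gd k u v x = \<bar>Gd k u v x\<bar>" by (simp add: sg_def)
    have "\<forall>z. \<bar>z - x\<bar> \<le> \<eta> \<longrightarrow> sg * Gd k u v z \<ge> \<delta> / 2"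
    proof (intro allI impI)
      fix z assume z: "\<bar>z - x\<bar> \<le> \<eta>"
      have "\<bar>Gd k u v z - Gd k u v x\<bar> \<le> HH * \<bar>z - x\<bar>"
        by (rule mvt_abs[where f="Gd k u v" and f'="Gd (Suc k) u v", OF Gd_deriv is_interval_univ])
           (use HHb k in auto)
      also have "\<dots> \<le> HH * \<eta>" using z HHpos by simp
      also have "\<dots> = \<delta> / 2" using HHpos by (simp add: \<eta>_def)
      finally have "\<bar>Gd k u v z - Gd k u v x\<bar> \<le> \<delta> / 2" .
      moreover have "sg * Gd k u v z = sg * Gd k u v x + sg * (Gd k u v z - Gd k u v x)" by (simp add: algebra_simps)
      moreover have "\<bar>sg * (Gd k u v z - Gd k u v x)\<bar> = \<bar>Gd k u v z - Gd k u v x\<bar>" by (simp add: sg_def abs_mult)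
      ultimately show "sg * Gd k u v z \<ge> \<delta> / 2"
        using sgx k(2) abs_le_D2[of "sg * (Gd k u v z - Gd k u v x)" "\<delta> / 2"] by linarith
    qed
    moreover have "sg = 1 \<or> sg = -1" by (simp add: sg_def)
    ultimately show "\<exists>k\<le>K. \<exists>sg::real. (sg = 1 \<or> sg = -1) \<and> (\<forall>z. \<bar>z - x\<bar> \<le> \<eta> \<longrightarrow> sg * Gd k u v z \<ge> \<delta> / 2)"
      using k(1) by blast
  qed
  moreover have "\<delta> / 2 > 0" using K(1) by simp
  ultimately show ?thesis using eta by blast
qed

end


definition sh :: "nat \<Rightarrow> (nat \<Rightarrow> nat) \<Rightarrow> nat \<Rightarrow> nat" where
  "sh p u = (\<lambda>k. if k = 0 then 0 else u (k + p))"

lemma Pre_Suc: "Pre b u (Suc n) = Pre b u n + real (u (Suc n)) * real b ^ n"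
  by (simp add: Pre_def)

lemma Pre_split: "Pre b u (p + n) = Pre b u p + real b ^ p * Pre b (sh p u) n"
proof (induction n)
  case 0 thus ?case by (simp add: Pre_def)
next
  case (Suc n)
  have "Pre b u (p + Suc n) = Pre b u (p + n) + real (u (Suc (p + n))) * real b ^ (p + n)"
    by (simp add: Pre_Suc)
  also have "\<dots> = Pre b u p + real b ^ p * (Pre b (sh p u) n + real (sh p u (Suc n)) * real b ^ n)"
    using Suc by (simp add: sh_def power_add algebra_simps)
  also have "\<dots> = Pre b u p + real b ^ p * Pre b (sh p u) (Suc n)" by (simp add: Pre_Suc)
  finally show ?case .
qed

lemma Pre_bounds:
  assumes "u \<in> Sigma b" "b \<ge> 1"
  shows "0 \<le> Pre b u p \<and> Pre b u p \<le> real b ^ p - 1"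
proof (induction p)
  case 0 thus ?case by (simp add: Pre_def)
next
  case (Suc p)
  have "u (Suc p) < b" using assms by (simp add: Sigma_def)
  hence "real (u (Suc p)) \<le> real b - 1" by linarith
  hence "real (u (Suc p)) * real b ^ p \<le> (real b - 1) * real b ^ p" by (intro mult_right_mono) auto
  thus ?case using Suc by (simp add: Pre_Suc algebra_simps)
qed

lemma sh_Sigma: "u \<in> Sigma b \<Longrightarrow> sh p u \<in> Sigma b"
  by (simp add: Sigma_def sh_def)

lemma Aarg_shift:
  assumes "b > 0"
  shows "Aarg b u (s + p) x = Aarg b (sh p u) s ((x + Pre b u p) / real b ^ p)"
proof -
  have "Pre b u (Suc (s + p)) = Pre b u p + real b ^ p * Pre b (sh p u) (Suc s)"
    using Pre_split[of b u p "Suc s"] by (simp add: add.commute)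
  moreover have "real b ^ Suc (s + p) = real b ^ p * real b ^ Suc s" by (simp add: power_add)
  ultimately show ?thesis using assms by (simp add: Aarg_def field_simps)
qed

lemma Pre_prefix:
  assumes "\<And>k. 1 \<le> k \<Longrightarrow> k \<le> n \<Longrightarrow> u k = v k"
  shows "Pre b u n = Pre b v n"
  unfolding Pre_def using assms by (intro sum.cong) auto

context YS begin

lemma Yterm_shift:
  "Yterm j u x (s + p) = gam ^ p * (1 / real b ^ p) ^ j * Yterm j (sh p u) ((x + Pre b u p) / real b ^ p) s"
proof -
  have A1: "Aarg b u (s + p) x = Aarg b (sh p u) s ((x + Pre b u p) / real b ^ p)"
    using Aarg_shift bpos by simp
  have G1: "gam ^ Suc (s + p) = gam ^ p * gam ^ Suc s" by (simp add: power_add)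
  have P1: "(1 / real b ^ Suc (s + p)) ^ j = (1 / real b ^ p) ^ j * (1 / real b ^ Suc s) ^ j"
  proof -
    have "1 / real b ^ Suc (s + p) = (1 / real b ^ p) * (1 / real b ^ Suc s)" by (simp add: power_add)
    thus ?thesis by (simp only: power_mult_distrib)
  qed
  show ?thesis unfolding Yterm_def A1 G1 P1 by (simp only: mult_ac)
qed

lemma rescale:
  assumes pre: "\<And>k. 1 \<le> k \<Longrightarrow> k \<le> p \<Longrightarrow> u k = v k"
  shows "Gd j u v x = gam ^ p * (1 / real b ^ p) ^ j * Gd j (sh p u) (sh p v) ((x + Pre b u p) / real b ^ p)"
proof -
  define f where "f s = Yterm j u x s - Yterm j v x s" for s
  have sf: "summable f" unfolding f_def by (intro summable_diff Yterm_summable)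
  have "(\<Sum>s. f s) = (\<Sum>s. Yterm j u x s) - (\<Sum>s. Yterm j v x s)"
    unfolding f_def by (rule suminf_diff[OF Yterm_summable Yterm_summable, symmetric])
  hence "Gd j u v x = - (\<Sum>s. f s)" unfolding Gd_def Yd_def by simp
  have z: "f i = 0" if "i < p" for i
  proof -
    have "Pre b u (Suc i) = Pre b v (Suc i)" by (rule Pre_prefix) (use pre that in auto)
    thus ?thesis by (simp add: f_def Yterm_def Aarg_def)
  qed
  have "(\<Sum>s. f s) = (\<Sum>s. f (s + p)) + (\<Sum>i<p. f i)" by (rule suminf_split_initial_segment[OF sf])
  hence e1: "(\<Sum>s. f s) = (\<Sum>s. f (s + p))" using z by simp
  define y where "y = (x + Pre b u p) / real b ^ p"
  have Pv: "Pre b v p = Pre b u p" by (rule Pre_prefix) (use pre in auto)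
  have "f (s + p) = gam ^ p * (1 / real b ^ p) ^ j * (Yterm j (sh p u) y s - Yterm j (sh p v) y s)" for s
    unfolding f_def Yterm_shift y_def Pv by (simp add: algebra_simps)
  hence "(\<Sum>s. f (s + p)) = gam ^ p * (1 / real b ^ p) ^ j * (\<Sum>s. Yterm j (sh p u) y s - Yterm j (sh p v) y s)"
    by (simp add: suminf_mult summable_diff Yterm_summable)
  also have "(\<Sum>s. Yterm j (sh p u) y s - Yterm j (sh p v) y s) = - Gd j (sh p u) (sh p v) y"
  proof -
    have "(\<Sum>s. Yterm j (sh p u) y s - Yterm j (sh p v) y s) = (\<Sum>s. Yterm j (sh p u) y s) - (\<Sum>s. Yterm j (sh p v) y s)"
      by (rule suminf_diff[OF Yterm_summable Yterm_summable, symmetric])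
    thus ?thesis unfolding Gd_def Yd_def by simp
  qed
  finally show ?thesis using e1 \<open>Gd j u v x = - (\<Sum>s. f s)\<close> by (simp add: y_def)
qed

end


lemma exists_good_cell:
  fixes f :: "nat \<Rightarrow> real \<Rightarrow> real"
  assumes d: "\<And>i x. (f i has_real_derivative f (Suc i) x) (at x)"
    and w: "w \<ge> (real BK + 2) * l" and l: "l > 0" and dl: "\<delta> > 0"
    and lo: "\<And>x. x \<in> {p0..p0+w} \<Longrightarrow> f j x \<ge> \<delta>"
    and BK: "3 * (2 ^ j - 1) \<le> BK"
  shows "\<exists>i::int. of_int i * l \<ge> p0 \<and> (of_int i + 1) * l \<le> p0 + w \<and>
           (\<forall>x. of_int i * l \<le> x \<and> x < (of_int i + 1) * l \<longrightarrow> \<bar>f 0 x\<bar> \<ge> \<delta> * l ^ j)"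
proof -
  let ?W = "{p0..p0+w}"
  have cb: "finite (badcells l ?W (f 0) (\<delta> * l ^ j)) \<and> card (badcells l ?W (f 0) (\<delta> * l ^ j)) \<le> 3 * (2 ^ j - 1)"
    by (rule count_bad[OF d is_interval_cc dl l lo])
  define c where "c = \<lceil>p0 / l\<rceil>"
  define I where "I = {c..c + int BK}"
  have inW: "of_int i * l \<ge> p0 \<and> (of_int i + 1) * l \<le> p0 + w" if "i \<in> I" for i
  proof
    have "of_int c \<ge> p0 / l" unfolding c_def by simp
    hence "of_int i \<ge> p0 / l" using that by (simp add: I_def; linarith?)
    thus "of_int i * l \<ge> p0" using l by (simp add: field_simps)
    have "of_int c < p0 / l + 1" unfolding c_def by linarith
    hence "of_int i + 1 < p0 / l + real BK + 2" using that by (simp add: I_def; linarith?)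
    hence "(of_int i + 1) * l < (p0 / l + real BK + 2) * l" using l by (simp add: mult_strict_right_mono)
    also have "\<dots> = p0 + (real BK + 2) * l" using l by (simp add: field_simps)
    finally show "(of_int i + 1) * l \<le> p0 + w" using w by linarith
  qed
  have "\<not> I \<subseteq> badcells l ?W (f 0) (\<delta> * l ^ j)"
  proof
    assume "I \<subseteq> badcells l ?W (f 0) (\<delta> * l ^ j)"
    hence "card I \<le> card (badcells l ?W (f 0) (\<delta> * l ^ j))" using cb by (intro card_mono) auto
    moreover have "card I = BK + 1" by (simp add: I_def)
    ultimately show False using cb BK by linarith
  qed
  then obtain i where i: "i \<in> I" "i \<notin> badcells l ?W (f 0) (\<delta> * l ^ j)" by blast
  have "\<forall>x. of_int i * l \<le> x \<and> x < (of_int i + 1) * l \<longrightarrow> \<bar>f 0 x\<bar> \<ge> \<delta> * l ^ j"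
  proof (intro allI impI)
    fix x assume x: "of_int i * l \<le> x \<and> x < (of_int i + 1) * l"
    hence "x \<in> ?W" using inW[OF i(1)] by auto
    thus "\<bar>f 0 x\<bar> \<ge> \<delta> * l ^ j" using i(2) x unfolding badcells_def by force
  qed
  thus ?thesis using inW[OF i(1)] by blast
qed

context YS begin

lemma piece_lemma:
  assumes NB: "\<forall>u v x. (u, v, x) \<in> QQ b \<longrightarrow>
           (\<exists>k\<le>K. \<exists>sg::real. (sg = 1 \<or> sg = -1) \<and> (\<forall>z. \<bar>z - x\<bar> \<le> \<eta> \<longrightarrow> sg * Gd k u v z \<ge> \<delta>))"
    and u: "u \<in> Sigma b" and v: "v \<in> Sigma b"
    and pre: "\<And>k. 1 \<le> k \<Longrightarrow> k \<le> p \<Longrightarrow> u k = v k" and dif: "u (Suc p) \<noteq> v (Suc p)"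
    and a: "0 \<le> a" "a + L \<le> 1" and Lh: "L \<le> \<eta>" and Lp: "L > 0"
  shows "\<exists>k\<le>K. \<exists>sg::real. (sg = 1 \<or> sg = -1) \<and>
           (\<forall>z\<in>{a..a+L}. sg * Gd k u v z \<ge> gam ^ p * (1 / real b ^ p) ^ k * \<delta>)"
proof -
  define y where "y x = (x + Pre b u p) / real b ^ p" for x
  have bp: "real b ^ p \<ge> 1" using b2 by (simp add: one_le_power)
  have Pb: "0 \<le> Pre b u p" "Pre b u p \<le> real b ^ p - 1" using Pre_bounds[OF u] b2 by auto
  have ya: "y a \<in> {0..1}"
  proof -
    have "a + Pre b u p \<le> real b ^ p" using a Pb Lp by linarith
    moreover have "real b ^ p > 0" using bp by linarith
    ultimately have "(a + Pre b u p) / real b ^ p \<le> 1" by (simp add: divide_le_eq_1)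
    moreover have "0 \<le> (a + Pre b u p) / real b ^ p" using a Pb bp by simp
    ultimately show ?thesis by (simp add: y_def)
  qed
  have q: "(sh p u, sh p v, y a) \<in> QQ b"
    using sh_Sigma[OF u] sh_Sigma[OF v] dif ya by (simp add: QQ_def sh_def)
  obtain k sg where k: "k \<le> K" "sg = 1 \<or> sg = -1"
    "\<And>z. \<bar>z - y a\<bar> \<le> \<eta> \<Longrightarrow> sg * Gd k (sh p u) (sh p v) z \<ge> \<delta>"
    using NB q by blast
  have cpos: "gam ^ p * (1 / real b ^ p) ^ k > 0" using gam_pos bpos by simp
  have "\<forall>z\<in>{a..a+L}. sg * Gd k u v z \<ge> gam ^ p * (1 / real b ^ p) ^ k * \<delta>"
  proof
    fix z assume z: "z \<in> {a..a+L}"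
    have "y z - y a = (z - a) / real b ^ p" unfolding y_def by (simp only: diff_divide_distrib[symmetric]) simp
    hence "\<bar>y z - y a\<bar> = (z - a) / real b ^ p" using z bp by simp
    also have "\<dots> \<le> z - a" using z bp by (simp add: divide_le_eq mult_le_cancel_left1 order_trans)
    also have "\<dots> \<le> \<eta>" using z Lh by simp
    finally have "sg * Gd k (sh p u) (sh p v) (y z) \<ge> \<delta>" by (rule k(3))
    hence "gam ^ p * (1 / real b ^ p) ^ k * (sg * Gd k (sh p u) (sh p v) (y z)) \<ge> gam ^ p * (1 / real b ^ p) ^ k * \<delta>"
      using cpos by (intro mult_left_mono) auto
    moreover have "Gd k u v z = gam ^ p * (1 / real b ^ p) ^ k * Gd k (sh p u) (sh p v) (y z)"
      unfolding y_def by (rule rescale[OF pre])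
    ultimately show "sg * Gd k u v z \<ge> gam ^ p * (1 / real b ^ p) ^ k * \<delta>" by (simp add: algebra_simps)
  qed
  thus ?thesis using k by blast
qed

end


lemma nat_le_pow: "real N \<le> real b ^ N" if "b \<ge> 2" for b N :: nat
proof -
  have "N < 2 ^ N" by (rule less_exp)
  also have "(2::nat) ^ N \<le> b ^ N" using that by (intro power_mono) auto
  finally have "N \<le> b ^ N" by simp
  thus ?thesis by (metis of_nat_le_iff of_nat_power)
qed

context YS begin

lemma main_core:
  assumes NB: "\<forall>u v x. (u, v, x) \<in> QQ b \<longrightarrow>
           (\<exists>k\<le>K. \<exists>sg::real. (sg = 1 \<or> sg = -1) \<and> (\<forall>z. \<bar>z - x\<bar> \<le> \<eta> \<longrightarrow> sg * Gd k u v z \<ge> \<delta>))"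
    and dpos: "\<delta> > 0" and epos: "\<eta> > 0"
  shows "\<exists>l0 Q0 :: nat. \<exists>\<rho>0 :: real. l0 > 0 \<and> Q0 > 0 \<and> \<rho>0 > 0 \<and>
    (\<forall>n\<ge>1. \<forall>u\<in>Sigma b. \<forall>v\<in>Sigma b. u n \<noteq> v n \<longrightarrow>
       (SUP x\<in>{0..<1}. \<bar>Gd 0 u v x\<bar>) \<ge> \<rho>0 * real b powr (- real (Q0 * n))
     \<and> (\<Sum>i<b ^ l0. (INF x\<in>{real i / real b ^ l0 ..< real (i + 1) / real b ^ l0}. \<bar>Gd 0 u v x\<bar>))
         \<ge> \<rho>0 * (SUP x\<in>{0..1}. \<bar>Gd 0 u v x\<bar>))"
proof -
  define A where "A = 2 * (gam / (1 - gam) * Bd (Suc (Suc K)))"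
  have A0: "A \<ge> 0" using gam_pos gam_lt1 Bd_nonneg by (simp add: A_def)
  have Ab: "\<bar>Gd (Suc K) u v z\<bar> \<le> A" for u v z unfolding A_def by (rule Gd_bound)
  define C where "C = A / \<delta> + 1"
  have C1: "C \<ge> 1" using A0 dpos by (simp add: C_def)
  have AC: "A < C * \<delta>" using dpos by (simp add: C_def field_simps)
  define BK where "BK = 3 * (2 ^ K - 1 :: nat)"
  have BKj: "3 * (2 ^ j - 1) \<le> BK" if "j \<le> K" for j
  proof -
    have "(2::nat) ^ j - 1 \<le> 2 ^ K - 1" using that by (intro diff_le_mono power_increasing) auto
    thus ?thesis unfolding BK_def by linarith
  qed
  have binv: "1 / real b < 1" "1 / real b > 0" "1 / real b \<le> 1 / 2" using b2 by (auto simp: field_simps)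
  obtain n1 where n1: "(1 / real b) ^ n1 < \<eta>" using real_arch_pow_inv[OF epos binv(1)] by blast
  define l1 where "l1 = Suc n1"
  define L where "L = (1 / real b) ^ l1"
  have Lpos: "L > 0" using binv by (simp add: L_def)
  have Leta: "L \<le> \<eta>"
  proof -
    have "(1 / real b) ^ Suc n1 \<le> (1 / real b) ^ n1" using binv by (intro power_decreasing) auto
    thus ?thesis using n1 by (simp add: L_def l1_def)
  qed
  have Lhalf: "L \<le> 1 / 2"
  proof -
    have "(1 / real b) ^ Suc n1 \<le> (1 / real b) ^ 1" using binv by (intro power_decreasing) auto
    hence "L \<le> (1 / real b) ^ 1" unfolding L_def l1_def .
    thus ?thesis using binv(3) power_one_right[of "1 / real b"] by linarith
  qed
  obtain N where N: "2 * C * (real BK + 3) \<le> real N" using real_arch_simple by blast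
  define l2 where "l2 = N"
  have l2: "real b ^ l2 \<ge> 2 * C * (real BK + 3)" using N nat_le_pow[OF b2, of N] unfolding l2_def by linarith
  define l0 where "l0 = l1 + l2"
  define ll where "ll = (1 / real b) ^ l0"
  have llpos: "ll > 0" using binv by (simp add: ll_def)
  have ll1: "ll \<le> 1" using binv by (simp add: ll_def power_le_one)
  have llL: "ll = L / real b ^ l2" by (simp add: ll_def L_def l0_def power_add power_divide)
  have cellw: "(real BK + 2) * ll \<le> L / (2 * C)"
  proof -
    have bl2: "real b ^ l2 > 0" using bpos by simp
    have "(real BK + 2) * ll = (real BK + 2) * L / real b ^ l2" by (simp add: llL)
    also have "\<dots> \<le> (real BK + 2) * L / (2 * C * (real BK + 3))"
    proof (rule divide_left_mono)
      have pos3: "2 * C * (real BK + 3) > 0" using C1 by simp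
      show "0 < real b ^ l2 * (2 * C * (real BK + 3))" using pos3 bl2 by simp
    qed (use l2 Lpos in auto)
    also have "\<dots> = (L / (2 * C)) * ((real BK + 2) / (real BK + 3))" by (simp add: field_simps)
    also have "\<dots> \<le> (L / (2 * C)) * 1"
      using Lpos C1 by (intro mult_left_mono) auto
    also have "\<dots> = L / (2 * C)" by simp
    finally show ?thesis .
  qed
  define ll1 where "ll1 = L / (real BK + 2)"
  have ll1pos: "ll1 > 0" using Lpos by (simp add: ll1_def)
  have ll11: "ll1 \<le> 1" using Lpos Lhalf by (simp add: ll1_def field_simps)
  define \<rho>0 where "\<rho>0 = min (\<delta> * ll1 ^ K) (ll ^ K / 2)"
  have \<rho>pos: "\<rho>0 > 0" using dpos ll1pos llpos by (simp add: \<rho>0_def)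
  define Q0 where "Q0 = Suc K"
  have bnd0: "\<bar>Gd 0 u v x\<bar> \<le> 2 * (gam / (1 - gam) * Bd (Suc 0))" for u v x by (rule Gd_bound)
  have main: "(SUP x\<in>{0..<1}. \<bar>Gd 0 u v x\<bar>) \<ge> \<rho>0 * real b powr (- real (Q0 * n))
     \<and> (\<Sum>i<b ^ l0. (INF x\<in>{real i / real b ^ l0 ..< real (i + 1) / real b ^ l0}. \<bar>Gd 0 u v x\<bar>))
         \<ge> \<rho>0 * (SUP x\<in>{0..1}. \<bar>Gd 0 u v x\<bar>)"
    if n: "n \<ge> 1" and u: "u \<in> Sigma b" and v: "v \<in> Sigma b" and uvn: "u n \<noteq> v n" for n u v
  proof -
    define m where "m = (LEAST m. u m \<noteq> v m)"
    have mdif: "u m \<noteq> v m" unfolding m_def by (rule LeastI[of _ n]) (rule uvn)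
    have mn: "m \<le> n" unfolding m_def by (rule Least_le) (rule uvn)
    have m0: "m \<noteq> 0" using mdif u v by (metis (mono_tags, lifting) Sigma_def mem_Collect_eq)
    define p where "p = m - 1"
    have pm: "Suc p = m" using m0 by (simp add: p_def)
    have pn: "p \<le> n" using mn by (simp add: p_def)
    have pre: "u k = v k" if "1 \<le> k" "k \<le> p" for k
    proof -
      have "k < m" using that pm by simp
      thus ?thesis unfolding m_def using not_less_Least by blast
    qed
    have dif: "u (Suc p) \<noteq> v (Suc p)" using mdif pm by simp
    define cst where "cst k = gam ^ p * (1 / real b ^ p) ^ k" for k
    have cstpos: "cst k > 0" for k using gam_pos bpos by (simp add: cst_def)
    have ib: "1 / real b ^ p \<le> 1" "1 / real b ^ p > 0" using bpos b2 by (auto simp: field_simps one_le_power)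
    have cst_mono: "cst k' \<le> cst k" if "k \<le> k'" for k k'
    proof -
      have "(1 / real b ^ p) ^ k' \<le> (1 / real b ^ p) ^ k" using ib that by (intro power_decreasing) auto
      thus ?thesis unfolding cst_def using gam_pos by (intro mult_left_mono) auto
    qed
    have dG: "\<And>i x. (Gd i u v has_real_derivative Gd (Suc i) u v x) (at x)" by (rule Gd_deriv)
    have dsG: "\<And>i x. ((\<lambda>x. sg * Gd i u v x) has_real_derivative sg * Gd (Suc i) u v x) (at x)" for sg
      by (intro DERIV_cmult Gd_deriv)
    have bdd: "bdd_above ((\<lambda>x. \<bar>Gd 0 u v x\<bar>) ` X)" for X
      using bnd0[of u v] by (intro bdd_aboveI[of _ "2 * (gam / (1 - gam) * Bd (Suc 0))"]) auto
    have first: "(SUP x\<in>{0..<1}. \<bar>Gd 0 u v x\<bar>) \<ge> \<rho>0 * real b powr (- real (Q0 * n))"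
    proof -
      have "\<exists>k\<le>K. \<exists>sg::real. (sg = 1 \<or> sg = -1) \<and>
           (\<forall>z\<in>{0..0+L}. sg * Gd k u v z \<ge> gam ^ p * (1 / real b ^ p) ^ k * \<delta>)"
        by (rule piece_lemma[OF NB u v pre dif]) (use Leta Lpos Lhalf in auto)
      then obtain k sg where k: "k \<le> K" "sg = 1 \<or> sg = -1" "\<forall>z\<in>{0..0+L}. sg * Gd k u v z \<ge> cst k * \<delta>"
        unfolding cst_def by blast
      have "\<exists>i::int. of_int i * ll1 \<ge> 0 \<and> (of_int i + 1) * ll1 \<le> 0 + L \<and>
           (\<forall>x. of_int i * ll1 \<le> x \<and> x < (of_int i + 1) * ll1 \<longrightarrow> \<bar>sg * Gd 0 u v x\<bar> \<ge> cst k * \<delta> * ll1 ^ k)"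
      proof (rule exists_good_cell[where f="\<lambda>i x. sg * Gd i u v x", OF dsG])
        show "L \<ge> (real BK + 2) * ll1" by (simp add: ll1_def)
        show "ll1 > 0" by (rule ll1pos)
        show "cst k * \<delta> > 0" using cstpos[of k] dpos by simp
        show "\<And>x. x \<in> {0..0+L} \<Longrightarrow> cst k * \<delta> \<le> sg * Gd k u v x" using k(3) by blast
        show "3 * (2 ^ k - 1) \<le> BK" by (rule BKj[OF k(1)])
      qed
      then obtain i where i: "of_int i * ll1 \<ge> 0" "(of_int i + 1) * ll1 \<le> 0 + L"
        "\<forall>x. of_int i * ll1 \<le> x \<and> x < (of_int i + 1) * ll1 \<longrightarrow> \<bar>sg * Gd 0 u v x\<bar> \<ge> cst k * \<delta> * ll1 ^ k"
        by blast
      define x where "x = of_int i * ll1"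
      have x01: "x \<in> {0..<1}" using i Lhalf ll1pos by (auto simp: x_def algebra_simps)
      have sgabs: "\<bar>sg * Gd 0 u v x\<bar> = \<bar>Gd 0 u v x\<bar>" using k(2) by (auto simp: abs_mult)
      have gx: "\<bar>Gd 0 u v x\<bar> \<ge> cst k * \<delta> * ll1 ^ k" using i(3) ll1pos sgabs by (auto simp: x_def)
      have "cst k \<ge> (1 / real b) ^ (Suc K * n)"
      proof -
        have "cst k \<ge> cst K" by (rule cst_mono[OF k(1)])
        moreover have "gam ^ p \<ge> (1 / real b) ^ p" using gam_gt binv by (intro power_mono) auto
        hence "cst K \<ge> (1 / real b) ^ p * (1 / real b ^ p) ^ K"
          unfolding cst_def using ib by (intro mult_right_mono) auto
        moreover have "(1 / real b) ^ p * (1 / real b ^ p) ^ K = (1 / real b) ^ (Suc K * p)"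
        proof -
          have e1: "(1 / real b ^ p) ^ K = (1 / real b) ^ (p * K)" by (simp only: power_one_over power_mult)
          have e2: "Suc K * p = p + p * K" by simp
          show ?thesis unfolding e1 e2 by (simp only: power_add)
        qed
        moreover have "(1 / real b) ^ (Suc K * p) \<ge> (1 / real b) ^ (Suc K * n)"
          using binv pn by (intro power_decreasing mult_le_mono2) auto
        ultimately show ?thesis by linarith
      qed
      moreover have "ll1 ^ k \<ge> ll1 ^ K" using ll1pos ll11 k(1) by (intro power_decreasing) auto
      ultimately have "cst k * \<delta> * ll1 ^ k \<ge> (1 / real b) ^ (Suc K * n) * \<delta> * ll1 ^ K"
        using dpos ll1pos cstpos[of k] by (intro mult_mono) auto
      moreover have "real b powr (- real (Q0 * n)) = (1 / real b) ^ (Suc K * n)"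
      proof -
        have "real b powr (- real (Q0 * n)) = inverse (real b powr real (Q0 * n))" by (rule powr_minus)
        also have "\<dots> = inverse (real b ^ (Q0 * n))" using powr_realpow[OF bpos, of "Q0 * n"] by simp
        also have "\<dots> = (1 / real b) ^ (Suc K * n)" by (simp only: Q0_def inverse_eq_divide power_one_over)
        finally show ?thesis .
      qed
      moreover have "\<rho>0 \<le> \<delta> * ll1 ^ K" by (simp add: \<rho>0_def)
      ultimately have "\<bar>Gd 0 u v x\<bar> \<ge> \<rho>0 * real b powr (- real (Q0 * n))"
      proof -
        assume a1: "cst k * \<delta> * ll1 ^ k \<ge> (1 / real b) ^ (Suc K * n) * \<delta> * ll1 ^ K"
          and a2: "real b powr (- real (Q0 * n)) = (1 / real b) ^ (Suc K * n)"
          and a3: "\<rho>0 \<le> \<delta> * ll1 ^ K"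
        have "\<rho>0 * real b powr (- real (Q0 * n)) \<le> (\<delta> * ll1 ^ K) * (1 / real b) ^ (Suc K * n)"
          unfolding a2 using a3 binv by (intro mult_right_mono) auto
        also have "\<dots> = (1 / real b) ^ (Suc K * n) * \<delta> * ll1 ^ K" by (simp only: mult_ac)
        also have "\<dots> \<le> \<bar>Gd 0 u v x\<bar>" using a1 gx by linarith
        finally show ?thesis .
      qed
      also have "\<bar>Gd 0 u v x\<bar> \<le> (SUP x\<in>{0..<1}. \<bar>Gd 0 u v x\<bar>)"
        by (rule cSUP_upper[OF x01 bdd])
      finally show ?thesis .
    qed
    have contG: "continuous_on {0..1} (\<lambda>x. \<bar>Gd 0 u v x\<bar>)"
    proof -
      have "continuous_on {0..1} (Gd 0 u v)"
        by (rule continuous_at_imp_continuous_on) (use dG DERIV_isCont in blast)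
      thus ?thesis by (intro continuous_intros)
    qed
    obtain xs where xs: "xs \<in> {0..1}" "\<And>y. y \<in> {0..1} \<Longrightarrow> \<bar>Gd 0 u v y\<bar> \<le> \<bar>Gd 0 u v xs\<bar>"
      using continuous_attains_sup[OF compact_Icc _ contG] by auto
    define S where "S = \<bar>Gd 0 u v xs\<bar>"
    have S0: "S \<ge> 0" by (simp add: S_def)
    have supS: "(SUP x\<in>{0..1}. \<bar>Gd 0 u v x\<bar>) \<le> S"
      by (rule cSUP_least) (use xs in \<open>auto simp: S_def\<close>)
    have ne: "{real i / real b ^ l0 ..< real (i + 1) / real b ^ l0} \<noteq> {}" for i
      using bpos by (simp add: divide_strict_right_mono)
    have INF0: "(INF x\<in>{real i / real b ^ l0 ..< real (i + 1) / real b ^ l0}. \<bar>Gd 0 u v x\<bar>) \<ge> 0" for i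
      by (rule cINF_greatest[OF ne]) simp
    have second: "(\<Sum>i<b ^ l0. (INF x\<in>{real i / real b ^ l0 ..< real (i + 1) / real b ^ l0}. \<bar>Gd 0 u v x\<bar>))
         \<ge> \<rho>0 * S"
    proof (cases "S = 0")
      case True
      thus ?thesis using INF0 by (simp add: sum_nonneg)
    next
      case False
      hence Spos: "S > 0" using S0 by simp
      define a where "a = min xs (1 - L)"
      have a: "0 \<le> a" "a + L \<le> 1" "xs \<in> {a..a+L}" using xs Lhalf Lpos by (auto simp: a_def)
      have "\<exists>k\<le>K. \<exists>sg::real. (sg = 1 \<or> sg = -1) \<and>
           (\<forall>z\<in>{a..a+L}. sg * Gd k u v z \<ge> gam ^ p * (1 / real b ^ p) ^ k * \<delta>)"
        by (rule piece_lemma[OF NB u v pre dif a(1,2) Leta Lpos])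
      then obtain k sg where k: "k \<le> K" "sg = 1 \<or> sg = -1" "\<forall>z\<in>{a..a+L}. sg * Gd k u v z \<ge> cst k * \<delta>"
        unfolding cst_def by blast
      define A1 where "A1 = cst (Suc K) * A"
      have hk: "\<bar>Gd k u v z\<bar> \<ge> cst k * \<delta>" if "z \<in> {a..a+L}" for z
      proof -
        have "sg * Gd k u v z \<le> \<bar>Gd k u v z\<bar>" using k(2) by auto
        thus ?thesis using k(3) that by force
      qed
      have hK: "\<bar>Gd (Suc K) u v z\<bar> \<le> A1" for z
      proof -
        have "Gd (Suc K) u v z = cst (Suc K) * Gd (Suc K) (sh p u) (sh p v) ((z + Pre b u p) / real b ^ p)"
          unfolding cst_def by (rule rescale[OF pre])
        hence "\<bar>Gd (Suc K) u v z\<bar> = cst (Suc K) * \<bar>Gd (Suc K) (sh p u) (sh p v) ((z + Pre b u p) / real b ^ p)\<bar>"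
          using cstpos[of "Suc K"] by (simp add: abs_mult)
        also have "\<dots> \<le> cst (Suc K) * A" using Ab cstpos[of "Suc K"] by (intro mult_left_mono) auto
        finally show ?thesis by (simp add: A1_def)
      qed
      have AC1: "A1 < C * (cst k * \<delta>)"
      proof -
        have "A1 \<le> cst k * A" unfolding A1_def using cst_mono[of k "Suc K"] k(1) A0 by (intro mult_right_mono) auto
        also have "\<dots> < cst k * (C * \<delta>)" using AC cstpos[of k] by simp
        finally show ?thesis by (simp add: algebra_simps)
      qed
      have "\<exists>j\<le>K. \<exists>t0\<in>{a..a+L}. \<exists>V sg. (sg = 1 \<or> sg = -1) \<and> (\<forall>t\<in>{a..a+L}. \<bar>Gd 0 u v t\<bar> \<le> V) \<and>
          (\<forall>t\<in>{a..a+L}. \<bar>t - t0\<bar> \<le> L / (2 * C) \<longrightarrow> sg * Gd j u v t \<ge> V / 2)"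
        by (rule chain_lemma[where f="\<lambda>i. Gd i u v", OF dG Lpos _ C1 k(1) hk _ hK AC1])
           (use Lhalf cstpos[of k] dpos in auto)
      then obtain j t0 V sg2 where j: "j \<le> K" "t0 \<in> {a..a+L}" "sg2 = 1 \<or> sg2 = -1"
        "\<forall>t\<in>{a..a+L}. \<bar>Gd 0 u v t\<bar> \<le> V" "\<forall>t\<in>{a..a+L}. \<bar>t - t0\<bar> \<le> L / (2 * C) \<longrightarrow> sg2 * Gd j u v t \<ge> V / 2"
        by blast
      have SV: "S \<le> V" using j(4) a(3) by (simp add: S_def)
      define h where "h = L / (2 * C)"
      have hpos: "h > 0" using Lpos C1 by (simp add: h_def)
      have hL: "h \<le> L / 2" using Lpos C1 by (simp add: h_def field_simps)
      define p0 where "p0 = max a (t0 - h)"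
      define w where "w = min (a + L) (t0 + h) - p0"
      have wh: "w \<ge> h" using j(2) hL hpos by (auto simp: w_def p0_def)
      have Wsub: "x \<in> {a..a+L} \<and> \<bar>x - t0\<bar> \<le> h" if "x \<in> {p0..p0+w}" for x
        using that by (auto simp: w_def p0_def)
      have "\<exists>i::int. of_int i * ll \<ge> p0 \<and> (of_int i + 1) * ll \<le> p0 + w \<and>
           (\<forall>x. of_int i * ll \<le> x \<and> x < (of_int i + 1) * ll \<longrightarrow> \<bar>sg2 * Gd 0 u v x\<bar> \<ge> V / 2 * ll ^ j)"
      proof (rule exists_good_cell[where f="\<lambda>i x. sg2 * Gd i u v x", OF dsG])
        show "w \<ge> (real BK + 2) * ll" using cellw wh by (simp add: h_def)
        show "ll > 0" by (rule llpos)
        show "V / 2 > 0" using SV Spos by simp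
        show "\<And>x. x \<in> {p0..p0+w} \<Longrightarrow> V / 2 \<le> sg2 * Gd j u v x"
          using j(5) Wsub unfolding h_def by blast
        show "3 * (2 ^ j - 1) \<le> BK" by (rule BKj[OF j(1)])
      qed
      then obtain i where i: "of_int i * ll \<ge> p0" "(of_int i + 1) * ll \<le> p0 + w"
        "\<forall>x. of_int i * ll \<le> x \<and> x < (of_int i + 1) * ll \<longrightarrow> \<bar>sg2 * Gd 0 u v x\<bar> \<ge> V / 2 * ll ^ j"
        by blast
      have p00: "p0 \<ge> 0" using a(1) by (simp add: p0_def)
      have pw1: "p0 + w \<le> 1" using a(2) by (auto simp: w_def p0_def)
      have i0: "i \<ge> 0"
      proof -
        have "of_int i * ll \<ge> 0" using i(1) p00 by linarith
        thus ?thesis using llpos by (simp add: zero_le_mult_iff)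
      qed
      have llb: "ll = 1 / real b ^ l0" by (simp add: ll_def power_one_over)
      have bl0: "real b ^ l0 > 0" using bpos by simp
      have ilt: "nat i < b ^ l0"
      proof -
        have "(of_int i + 1) * ll \<le> 1" using i(2) pw1 by linarith
        hence "of_int i + 1 \<le> real b ^ l0" using bl0 by (simp add: llb field_simps)
        hence "real (nat i) + 1 \<le> real (b ^ l0)" using i0 by simp
        thus ?thesis by linarith
      qed
      have cell: "{real (nat i) / real b ^ l0 ..< real (nat i + 1) / real b ^ l0} = {of_int i * ll ..< (of_int i + 1) * ll}"
        using i0 by (simp add: llb add.commute)
      have INFi: "(INF x\<in>{real (nat i) / real b ^ l0 ..< real (nat i + 1) / real b ^ l0}. \<bar>Gd 0 u v x\<bar>) \<ge> V / 2 * ll ^ j"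
      proof (rule cINF_greatest[OF ne])
        fix x assume "x \<in> {real (nat i) / real b ^ l0 ..< real (nat i + 1) / real b ^ l0}"
        hence "of_int i * ll \<le> x \<and> x < (of_int i + 1) * ll" unfolding cell by simp
        hence "\<bar>sg2 * Gd 0 u v x\<bar> \<ge> V / 2 * ll ^ j" using i(3) by blast
        moreover have "\<bar>sg2 * Gd 0 u v x\<bar> = \<bar>Gd 0 u v x\<bar>" using j(3) by (auto simp: abs_mult)
        ultimately show "V / 2 * ll ^ j \<le> \<bar>Gd 0 u v x\<bar>" by simp
      qed
      have "\<rho>0 * S \<le> (ll ^ K / 2) * S" using S0 by (intro mult_right_mono) (auto simp: \<rho>0_def)
      also have "\<dots> \<le> V / 2 * ll ^ j"
      proof -
        have "ll ^ K \<le> ll ^ j" using llpos ll1 j(1) by (intro power_decreasing) auto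
        hence "(ll ^ K / 2) * S \<le> (ll ^ j / 2) * V" using SV S0 llpos by (intro mult_mono) auto
        thus ?thesis by (simp add: algebra_simps)
      qed
      also have "\<dots> \<le> (INF x\<in>{real (nat i) / real b ^ l0 ..< real (nat i + 1) / real b ^ l0}. \<bar>Gd 0 u v x\<bar>)"
        by (rule INFi)
      also have "\<dots> \<le> (\<Sum>i<b ^ l0. (INF x\<in>{real i / real b ^ l0 ..< real (i + 1) / real b ^ l0}. \<bar>Gd 0 u v x\<bar>))"
        by (rule member_le_sum[where f="\<lambda>i. (INF x\<in>{real i / real b ^ l0 ..< real (i + 1) / real b ^ l0}. \<bar>Gd 0 u v x\<bar>)"])
           (use ilt INF0 in auto)
      finally show ?thesis .
    qed
    have "\<rho>0 * (SUP x\<in>{0..1}. \<bar>Gd 0 u v x\<bar>) \<le> \<rho>0 * S" using supS \<rho>pos by simp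
    thus ?thesis using first second by linarith
  qed
  show ?thesis
    by (intro exI[of _ l0] exI[of _ Q0] exI[of _ \<rho>0]) (use main \<rho>pos in \<open>auto simp: l0_def l1_def Q0_def\<close>)
qed

end


theorem mainTheorem15:
  fixes b :: nat and lam :: real and \<phi> :: "real \<Rightarrow> real"
  assumes "b \<ge> 2"
    and "1 / real b < lam" and "lam < 1"
    and "real_analytic_on UNIV \<phi>"
    and "\<forall>x. \<phi> (x + 1) = \<phi> x"
    and "condH b lam \<phi>"
  shows "\<exists>l0 Q0 :: nat. \<exists>\<rho>0 :: real. l0 > 0 \<and> Q0 > 0 \<and> \<rho>0 > 0 \<and>
    (\<forall>n\<ge>1. \<forall>u\<in>Sigma b. \<forall>v\<in>Sigma b. u n \<noteq> v n \<longrightarrow>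
       (SUP x\<in>{0..<1}. \<bar>Yfun b lam \<phi> x u - Yfun b lam \<phi> x v\<bar>) \<ge> \<rho>0 * real b powr (- real (Q0 * n))
     \<and> (\<Sum>i<b ^ l0. (INF x\<in>{real i / real b ^ l0 ..< real (i + 1) / real b ^ l0}.
            \<bar>Yfun b lam \<phi> x u - Yfun b lam \<phi> x v\<bar>))
         \<ge> \<rho>0 * (SUP x\<in>{0..1}. \<bar>Yfun b lam \<phi> x u - Yfun b lam \<phi> x v\<bar>))"
proof -
  obtain M1 R where MR: "M1 > 0" "R > 0" "\<And>j x. \<bar>phid \<phi> j x\<bar> \<le> M1 * fact j / R ^ j"
      "\<And>j x. (phid \<phi> j has_real_derivative phid \<phi> (Suc j) x) (at x)"
    using phi_bounds[OF assms(4)] assms(5) by blast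
  define Bd where "Bd = (\<lambda>j. M1 * fact j / R ^ j)"
  interpret Y: YS b lam \<phi> Bd
    by unfold_locales (use assms MR in \<open>auto simp: Bd_def\<close>)
  have BdM: "\<And>j. Bd j = M1 * fact j / R ^ j" by (simp add: Bd_def)
  obtain K \<delta> \<eta> where KE: "\<delta> > 0" "\<eta> > 0" "\<forall>u v x. (u, v, x) \<in> QQ b \<longrightarrow>
           (\<exists>k\<le>K. \<exists>sg::real. (sg = 1 \<or> sg = -1) \<and> (\<forall>z. \<bar>z - x\<bar> \<le> \<eta> \<longrightarrow> sg * Y.Gd k u v z \<ge> \<delta>))"
    using Y.uniform_nbhd[OF BdM MR(1,2) assms(6)] by blast
  have eq: "\<And>u v x. \<bar>Yfun b lam \<phi> x u - Yfun b lam \<phi> x v\<bar> = \<bar>Y.Gd 0 u v x\<bar>"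
    by (simp add: Y.Gd_def Y.Yd_0)
  show ?thesis
    unfolding eq by (rule Y.main_core[OF KE(3,1,2)])
qed


end
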